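(* Let $p\in\{1,2\}$ and let $\hat\nu$ be a minimizer of $\Psi_p$ over all probability measures on $\mathbb{R}^d$ (an optimal barycenter). Then: (i) for every $j\in\{1,\dots,N\}$, $\Psi_p(\mu^j)\le\frac{1}{\lambda_j}\Psi_p(\hat\nu)$; in particular, if $\lambda_j=\max_i\lambda_i$, then $\Psi_p(\mu^j)\le N\,\Psi_p(\hat\nu)$; (ii) for the mixture $\nu\coloneqq\sum_{i=1}^N\lambda_i\mu^i$, $\Psi_p(\nu)\le2\,\Psi_p(\hat\nu)$; (iii) if $\nu$ is a random measure equal to $\mu^i$ with probability $\lambda_i$ ($i=1,\dots,N$), then $\mathbb{E}[\Psi_p(\nu)]\le2\,\Psi_p(\hat\nu)$.
   Context: $\|\cdot\|$ is the Euclidean norm on $\mathbb{R}^d$. For $1\le p<\infty$ and probability measures $\mu,\nu$ on $\mathbb{R}^d$ with finite support, $\mathcal{W}_p^p(\mu,\nu)\coloneqq\min_{\pi\in\Pi(\mu,\nu)}\int\|x-y\|^p\,d\pi(x,y)$, where $\Pi(\mu,\nu)$ is the set of couplings of $\mu$ and $\nu$. Fix $N\ge2$, weights $\lambda\in\Delta_N\coloneqq\{\lambda\in(0,1)^N:\sum_i\lambda_i=1\}$, and discrete probability measures $\mu^i=\sum_{l=1}^{n_i}\mu^i_l\delta(x^i_l)$, $i=1,\dots,N$, on $\mathbb{R}^d$ with positive weights and pairwise distinct points $x^i_1,\dots,x^i_{n_i}$ for each $i$. The barycenter objective is $\Psi_p(\nu)\coloneqq\sum_{i=1}^N\lambda_i\mathcal{W}_p^p(\nu,\mu^i)$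 for probability measures $\nu$ on $\mathbb{R}^d$; an optimal barycenter (a minimizer of $\Psi_p$) exists. *)

theory Defs
  imports "HOL-Probability.Probability"
begin

definition borel_prob :: "'a::euclidean_space measure \<Rightarrow> bool" where
  "borel_prob \<mu> \<longleftrightarrow> prob_space \<mu> \<and> sets \<mu> = sets borel"

definition couplings :: "'a::euclidean_space measure \<Rightarrow> 'a measure \<Rightarrow> ('a \<times> 'a) measure set" where
  "couplings \<mu> \<nu> = {\<pi>. prob_space \<pi> \<and> sets \<pi> = sets (borel \<Otimes>\<^sub>M borel)
      \<and> distr \<pi> borel fst = \<mu> \<and> distr \<pi> borel snd = \<nu>}"

definition wass_pp :: "real \<Rightarrow> 'a::euclidean_space measure \<Rightarrow> 'a measure \<Rightarrow> ennreal" where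
  "wass_pp p \<mu> \<nu> = (INF \<pi>\<in>couplings \<mu> \<nu>. \<integral>\<^sup>+ z. ennreal (norm (fst z - snd z) powr p) \<partial>\<pi>)"

definition Psi :: "real \<Rightarrow> nat \<Rightarrow> (nat \<Rightarrow> real) \<Rightarrow> (nat \<Rightarrow> 'a::euclidean_space measure)
    \<Rightarrow> 'a measure \<Rightarrow> ennreal" where
  "Psi p N lam mu \<nu> = (\<Sum>i<N. ennreal (lam i) * wass_pp p \<nu> (mu i))"

definition discrete_measure :: "nat \<Rightarrow> (nat \<Rightarrow> real) \<Rightarrow> (nat \<Rightarrow> 'a::euclidean_space) \<Rightarrow> 'a measure" where
  "discrete_measure n w x = measure_of UNIV (sets borel)
      (\<lambda>A. \<Sum>l<n. ennreal (w l) * indicator A (x l))"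

definition mixture :: "nat \<Rightarrow> (nat \<Rightarrow> real) \<Rightarrow> (nat \<Rightarrow> 'a::euclidean_space measure) \<Rightarrow> 'a measure" where
  "mixture N lam mu = measure_of UNIV (sets borel)
      (\<lambda>A. \<Sum>i<N. ennreal (lam i) * emeasure (mu i) A)"

end

theory Submission
  imports Defs
begin


definition dm :: "'i set \<Rightarrow> ('i \<Rightarrow> ennreal) \<Rightarrow> ('i \<Rightarrow> 'b::topological_space) \<Rightarrow> 'b measure" where
  "dm I g pts = distr (density (count_space I) g) borel pts"

lemma sets_dm[simp, measurable_cong]: "sets (dm I g pts) = sets borel"
  by (simp add: dm_def)

lemma space_dm[simp]: "space (dm I g pts) = UNIV"
  by (simp add: dm_def)

lemma emeasure_dm:
  assumes "finite I" "A \<in> sets borel"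
  shows "emeasure (dm I g pts) A = (\<Sum>k\<in>I. g k * indicator A (pts k))"
proof -
  have "emeasure (dm I g pts) A = emeasure (density (count_space I) g) (pts -` A \<inter> I)"
    unfolding dm_def using assms by (subst emeasure_distr) auto
  also have "\<dots> = (\<integral>\<^sup>+ k. g k * indicator (pts -` A \<inter> I) k \<partial>count_space I)"
    by (subst emeasure_density) auto
  also have "\<dots> = (\<Sum>k\<in>I. g k * indicator (pts -` A \<inter> I) k)"
    using assms by (simp add: nn_integral_count_space_finite)
  also have "\<dots> = (\<Sum>k\<in>I. g k * indicator A (pts k))"
    by (intro sum.cong) (auto simp: indicator_def)
  finally show ?thesis .
qed

lemma nn_integral_dm:
  assumes "finite I" "f \<in> borel_measurable borel"
  shows "(\<integral>\<^sup>+ z. f z \<partial>dm I g pts) = (\<Sum>k\<in>I. g k * f (pts k))"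
proof -
  have "(\<integral>\<^sup>+ z. f z \<partial>dm I g pts) = (\<integral>\<^sup>+ k. f (pts k) \<partial>density (count_space I) g)"
    unfolding dm_def using assms by (subst nn_integral_distr) auto
  also have "\<dots> = (\<integral>\<^sup>+ k. g k * f (pts k) \<partial>count_space I)"
    by (subst nn_integral_density) auto
  also have "\<dots> = (\<Sum>k\<in>I. g k * f (pts k))"
    using assms by (simp add: nn_integral_count_space_finite)
  finally show ?thesis .
qed

lemma prob_dm:
  assumes "finite I" "(\<Sum>k\<in>I. g k) = 1"
  shows "prob_space (dm I g pts)"
  by (rule prob_spaceI) (simp add: emeasure_dm assms)

lemma distr_dm:
  assumes "f \<in> borel_measurable borel"
  shows "distr (dm I g pts) borel f = dm I g (f \<circ> pts)"
  unfolding dm_def using assms by (subst distr_distr) auto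

lemma dm_eqI:
  assumes "finite I" "finite J"
    "\<And>A. A \<in> sets borel \<Longrightarrow> (\<Sum>k\<in>I. g k * indicator A (pts k)) = (\<Sum>k\<in>J. h k * indicator A (qts k))"
  shows "dm I g pts = dm J h qts"
proof (rule measure_eqI)
  fix A assume "A \<in> sets (dm I g pts)"
  then have A: "A \<in> sets borel" by simp
  show "emeasure (dm I g pts) A = emeasure (dm J h qts) A"
    using emeasure_dm[OF assms(1) A, of g pts] emeasure_dm[OF assms(2) A, of h qts] assms(3)[OF A] by simp
qed simp

lemma discrete_measure_dm:
  "discrete_measure n w x = dm {..<n} (\<lambda>l. ennreal (w l)) x"
proof -
  have "dm {..<n} (\<lambda>l. ennreal (w l)) x = measure_of (space (dm {..<n} (\<lambda>l. ennreal (w l)) x))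
      (sets (dm {..<n} (\<lambda>l. ennreal (w l)) x)) (emeasure (dm {..<n} (\<lambda>l. ennreal (w l)) x))"
    by (rule measure_of_of_measure[symmetric])
  also have "\<dots> = discrete_measure n w x"
    unfolding discrete_measure_def space_dm sets_dm
    by (rule measure_of_eq) (auto simp: emeasure_dm sets.sigma_sets_eq[of borel, simplified])
  finally show ?thesis by simp
qed


lemma couplingsI:
  fixes \<pi> :: "('a::euclidean_space \<times> 'a) measure"
  assumes "prob_space \<pi>" "sets \<pi> = sets borel" "distr \<pi> borel fst = \<mu>" "distr \<pi> borel snd = \<nu>"
  shows "\<pi> \<in> couplings \<mu> \<nu>"
proof -
  have "sets (borel :: ('a\<times>'a) measure) = sets (borel \<Otimes>\<^sub>M borel)" by (simp only: borel_prod)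
  then show ?thesis using assms by (simp add: couplings_def)
qed

lemma meas_fst: "fst \<in> borel_measurable (borel :: ('a::euclidean_space\<times>'a) measure)"
  by (intro borel_measurable_continuous_onI continuous_intros)
lemma meas_snd: "snd \<in> borel_measurable (borel :: ('a::euclidean_space\<times>'a) measure)"
  by (intro borel_measurable_continuous_onI continuous_intros)
lemma meas_cost: "(\<lambda>z. ennreal (norm (fst z - snd z) powr p)) \<in> borel_measurable (borel :: ('a::euclidean_space\<times>'a) measure)"
  unfolding borel_prod[symmetric] by measurable

lemma coupling_G:
  fixes x1 x2 :: "nat \<Rightarrow> 'a::euclidean_space"
  assumes rows: "\<forall>l<n1. (\<Sum>m<n2. G (l,m)) = ennreal (w1 l)"
    and cols: "\<forall>m<n2. (\<Sum>l<n1. G (l,m)) = ennreal (w2 m)"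
    and s1: "(\<Sum>l<n1. w1 l) = 1" and nn: "\<forall>l<n1. 0 \<le> w1 l"
  shows "dm ({..<n1}\<times>{..<n2}) G (\<lambda>(l,m). (x1 l, x2 m))
     \<in> couplings (dm {..<n1} (\<lambda>l. ennreal (w1 l)) x1) (dm {..<n2} (\<lambda>l. ennreal (w2 l)) x2)"
proof (rule couplingsI)
  have "(\<Sum>k\<in>{..<n1}\<times>{..<n2}. G k) = (\<Sum>l<n1. \<Sum>m<n2. G (l,m))"
    by (simp add: sum.cartesian_product)
  also have "\<dots> = (\<Sum>l<n1. ennreal (w1 l))" using rows by simp
  also have "\<dots> = 1" using s1 nn by (subst sum_ennreal) auto
  finally show "prob_space (dm ({..<n1}\<times>{..<n2}) G (\<lambda>(l,m). (x1 l, x2 m)))"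
    by (intro prob_dm) auto
  show "distr (dm ({..<n1}\<times>{..<n2}) G (\<lambda>(l,m). (x1 l, x2 m))) borel fst = dm {..<n1} (\<lambda>l. ennreal (w1 l)) x1"
    unfolding distr_dm[OF meas_fst]
  proof (rule dm_eqI)
    fix A :: "'a set"
    have "(\<Sum>k\<in>{..<n1}\<times>{..<n2}. G k * indicator A ((fst \<circ> (\<lambda>(l,m). (x1 l, x2 m))) k))
        = (\<Sum>l<n1. \<Sum>m<n2. G (l,m) * indicator A (x1 l))"
      unfolding sum.cartesian_product by (rule sum.cong) auto
    also have "\<dots> = (\<Sum>l<n1. (\<Sum>m<n2. G (l,m)) * indicator A (x1 l))"
      by (simp add: sum_distrib_right)
    also have "\<dots> = (\<Sum>l<n1. ennreal (w1 l) * indicator A (x1 l))"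
      using rows by simp
    finally show "(\<Sum>k\<in>{..<n1}\<times>{..<n2}. G k * indicator A ((fst \<circ> (\<lambda>(l,m). (x1 l, x2 m))) k))
        = (\<Sum>l<n1. ennreal (w1 l) * indicator A (x1 l))" .
  qed auto
  show "distr (dm ({..<n1}\<times>{..<n2}) G (\<lambda>(l,m). (x1 l, x2 m))) borel snd = dm {..<n2} (\<lambda>l. ennreal (w2 l)) x2"
    unfolding distr_dm[OF meas_snd]
  proof (rule dm_eqI)
    fix A :: "'a set"
    have "(\<Sum>k\<in>{..<n1}\<times>{..<n2}. G k * indicator A ((snd \<circ> (\<lambda>(l,m). (x1 l, x2 m))) k))
        = (\<Sum>l<n1. \<Sum>m<n2. G (l,m) * indicator A (x2 m))"
      unfolding sum.cartesian_product by (rule sum.cong) auto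
    also have "\<dots> = (\<Sum>m<n2. \<Sum>l<n1. G (l,m) * indicator A (x2 m))"
      by (rule sum.swap)
    also have "\<dots> = (\<Sum>m<n2. (\<Sum>l<n1. G (l,m)) * indicator A (x2 m))"
      by (simp add: sum_distrib_right)
    also have "\<dots> = (\<Sum>m<n2. ennreal (w2 m) * indicator A (x2 m))"
      using cols by simp
    finally show "(\<Sum>k\<in>{..<n1}\<times>{..<n2}. G k * indicator A ((snd \<circ> (\<lambda>(l,m). (x1 l, x2 m))) k))
        = (\<Sum>m<n2. ennreal (w2 m) * indicator A (x2 m))" .
  qed auto
qed simp


lemma sum_Sig:
  fixes n :: "nat \<Rightarrow> nat" and ni :: nat
  shows "(\<Sum>k\<in>(SIGMA j:{..<N}. {..<n j}\<times>{..<ni}). F k) = (\<Sum>j<N. \<Sum>l<n j. \<Sum>m<ni. F (j,l,m))"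
proof -
  have "(\<Sum>k\<in>(SIGMA j:{..<N}. {..<n j}\<times>{..<ni}). F k) = (\<Sum>j<N. \<Sum>y\<in>{..<n j}\<times>{..<ni}. F (j,y))"
  proof -
    have f2: "\<forall>x\<in>{..<N}. finite ({..<n x}\<times>{..<ni})" by auto
    show ?thesis using sum.Sigma[OF finite_lessThan f2, of "\<lambda>j y. F (j,y)"] by simp
  qed
  then show ?thesis by (simp add: sum.cartesian_product)
qed

lemma dm_as_measure_of: "dm I g pts = measure_of UNIV (sets borel) (emeasure (dm I g pts))"
  using measure_of_of_measure[of "dm I g pts"] by simp

lemma coupling_mix:
  fixes x :: "nat \<Rightarrow> nat \<Rightarrow> 'a::euclidean_space"
  assumes rows: "\<forall>j<N. \<forall>l<n j. (\<Sum>m<n i. G j (l,m)) = ennreal (w j l)"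
    and cols: "\<forall>j<N. \<forall>m<n i. (\<Sum>l<n j. G j (l,m)) = ennreal (w i m)"
    and ws: "\<forall>j<N. (\<Sum>l<n j. w j l) = 1" and wnn: "\<forall>j<N. \<forall>l<n j. 0 \<le> w j l"
    and lnn: "\<forall>j<N. 0 \<le> lam j" and ls: "(\<Sum>j<N. lam j) = 1"
    and mu: "\<forall>j<N. mu j = dm {..<n j} (\<lambda>l. ennreal (w j l)) (x j)"
  shows "dm (SIGMA j:{..<N}. {..<n j}\<times>{..<n i}) (\<lambda>(j,l,m). ennreal (lam j) * G j (l,m)) (\<lambda>(j,l,m). (x j l, x i m))
     \<in> couplings (mixture N lam mu) (dm {..<n i} (\<lambda>l. ennreal (w i l)) (x i))"
    (is "?G \<in> _")
proof (rule couplingsI)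
  have fin: "finite (SIGMA j:{..<N}. {..<n j}\<times>{..<n i})" by auto
  have "(\<Sum>k\<in>(SIGMA j:{..<N}. {..<n j}\<times>{..<n i}). (\<lambda>(j,l,m). ennreal (lam j) * G j (l,m)) k)
      = (\<Sum>j<N. \<Sum>l<n j. \<Sum>m<n i. ennreal (lam j) * G j (l,m))"
    by (simp add: sum_Sig)
  also have "\<dots> = (\<Sum>j<N. \<Sum>l<n j. ennreal (lam j) * ennreal (w j l))"
    using rows by (simp add: sum_distrib_left[symmetric])
  also have "\<dots> = (\<Sum>j<N. ennreal (lam j))"
  proof (intro sum.cong refl)
    fix j assume "j \<in> {..<N}"
    then have "(\<Sum>l<n j. ennreal (w j l)) = 1" using ws wnn by (subst sum_ennreal) auto
    then show "(\<Sum>l<n j. ennreal (lam j) * ennreal (w j l)) = ennreal (lam j)"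
      by (simp add: sum_distrib_left[symmetric])
  qed
  also have "\<dots> = 1" using lnn ls by (subst sum_ennreal) auto
  finally show "prob_space ?G" by (intro prob_dm fin)
  show "distr ?G borel fst = mixture N lam mu"
    unfolding distr_dm[OF meas_fst] mixture_def
    apply (subst dm_as_measure_of)
  proof (rule measure_of_eq)
    fix A :: "'a set" assume "A \<in> sigma_sets UNIV (sets borel)"
    then have A: "A \<in> sets borel" by (simp add: sets.sigma_sets_eq[of borel, simplified])
    have "emeasure (dm (SIGMA j:{..<N}. {..<n j}\<times>{..<n i}) (\<lambda>(j,l,m). ennreal (lam j) * G j (l,m)) (fst \<circ> (\<lambda>(j,l,m). (x j l, x i m)))) A
       = (\<Sum>k\<in>(SIGMA j:{..<N}. {..<n j}\<times>{..<n i}). (\<lambda>(j,l,m). ennreal (lam j) * G j (l,m)) k * indicator A ((fst \<circ> (\<lambda>(j,l,m). (x j l, x i m))) k))"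
      by (rule emeasure_dm[OF fin A])
    also have "\<dots> = (\<Sum>j<N. \<Sum>l<n j. \<Sum>m<n i. ennreal (lam j) * G j (l,m) * indicator A (x j l))"
      unfolding sum_Sig by (intro sum.cong refl) simp
    also have "\<dots> = (\<Sum>j<N. ennreal (lam j) * (\<Sum>l<n j. (\<Sum>m<n i. G j (l,m)) * indicator A (x j l)))"
      by (simp only: sum_distrib_left sum_distrib_right mult.assoc)
    also have "\<dots> = (\<Sum>j<N. ennreal (lam j) * emeasure (mu j) A)"
      using rows mu A by (intro sum.cong refl) (simp add: emeasure_dm)
    finally show "emeasure (dm (SIGMA j:{..<N}. {..<n j}\<times>{..<n i}) (\<lambda>(j,l,m). ennreal (lam j) * G j (l,m)) (fst \<circ> (\<lambda>(j,l,m). (x j l, x i m)))) A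
       = (\<Sum>j<N. ennreal (lam j) * emeasure (mu j) A)" .
  qed auto
  show "distr ?G borel snd = dm {..<n i} (\<lambda>l. ennreal (w i l)) (x i)"
    unfolding distr_dm[OF meas_snd]
  proof (rule dm_eqI[OF fin])
    fix A :: "'a set"
    have "(\<Sum>k\<in>(SIGMA j:{..<N}. {..<n j}\<times>{..<n i}). (\<lambda>(j,l,m). ennreal (lam j) * G j (l,m)) k * indicator A ((snd \<circ> (\<lambda>(j,l,m). (x j l, x i m))) k))
       = (\<Sum>j<N. \<Sum>l<n j. \<Sum>m<n i. ennreal (lam j) * G j (l,m) * indicator A (x i m))"
      unfolding sum_Sig by (intro sum.cong refl) simp
    also have "\<dots> = (\<Sum>j<N. ennreal (lam j) * (\<Sum>m<n i. (\<Sum>l<n j. G j (l,m)) * indicator A (x i m)))"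
      by (simp only: sum_distrib_left sum_distrib_right mult.assoc sum.swap[of _ "{..<n i}"])
    also have "\<dots> = (\<Sum>j<N. ennreal (lam j) * (\<Sum>m<n i. ennreal (w i m) * indicator A (x i m)))"
      using cols by (intro sum.cong refl) simp
    also have "\<dots> = (\<Sum>m<n i. ennreal (w i m) * indicator A (x i m))"
    proof -
      have L: "(\<Sum>j<N. ennreal (lam j)) = 1" using lnn ls by (subst sum_ennreal) auto
      show ?thesis by (simp only: sum_distrib_right[symmetric] L mult_1)
    qed
    finally show "(\<Sum>k\<in>(SIGMA j:{..<N}. {..<n j}\<times>{..<n i}). (\<lambda>(j,l,m). ennreal (lam j) * G j (l,m)) k * indicator A ((snd \<circ> (\<lambda>(j,l,m). (x j l, x i m))) k))
       = (\<Sum>m<n i. ennreal (w i m) * indicator A (x i m))" .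
  qed auto
qed simp


lemma sum_ind_inj:
  fixes n :: nat
  assumes "inj_on x {..<n}" "k < n"
  shows "(\<Sum>l<n. f l * indicator {x l} (x k)) = (f k :: ennreal)"
proof -
  have "(\<Sum>l<n. f l * indicator {x l} (x k)) = (\<Sum>l<n. if l = k then f k else 0)"
    using assms by (intro sum.cong refl) (auto simp: indicator_def inj_on_def)
  also have "\<dots> = f k" using assms(2) sum.delta[of "{..<n}" k "\<lambda>_. f k"] by simp
  finally show ?thesis .
qed

locale cpl =
  fixes M :: "'a::euclidean_space measure" and \<pi> :: "('a \<times> 'a) measure"
    and n :: nat and w :: "nat \<Rightarrow> real" and x :: "nat \<Rightarrow> 'a"
  assumes M: "prob_space M" "sets M = sets borel"
    and pi: "\<pi> \<in> couplings M (dm {..<n} (\<lambda>l. ennreal (w l)) x)"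
    and wnn: "\<forall>l<n. 0 \<le> w l" and inj: "inj_on x {..<n}"
begin

definition kap :: "'a \<Rightarrow> 'a measure" where
  "kap a = distr (density \<pi> (indicator (UNIV \<times> {a}))) borel fst"

definition dens :: "'a \<Rightarrow> 'a \<Rightarrow> ennreal" where
  "dens a = RN_deriv M (kap a)"

lemma pi_prob: "prob_space \<pi>" and pi_sets: "sets \<pi> = sets borel"
  and pi_fst: "distr \<pi> borel fst = M" and pi_snd: "distr \<pi> borel snd = dm {..<n} (\<lambda>l. ennreal (w l)) x"
  using pi by (auto simp: couplings_def borel_prod[symmetric])

lemma pi_space[simp]: "space \<pi> = UNIV"
  using sets_eq_imp_space_eq[OF pi_sets] by simp

lemma M_space[simp]: "space M = UNIV"
  using sets_eq_imp_space_eq[OF M(2)] by simp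


lemma sets_kap: "sets (kap a) = sets M"
  by (simp add: kap_def M)

lemma emeasure_pi_fst: "A \<in> sets borel \<Longrightarrow> emeasure \<pi> (fst -` A) = emeasure M A"
  using emeasure_distr[of fst \<pi> borel A] pi_fst meas_fst[where 'a='a] pi_sets
  by (simp add: measurable_cong_sets[OF pi_sets refl])

lemma mpi[simp]: "measurable \<pi> N = measurable borel N"
  by (rule measurable_cong_sets[OF pi_sets refl])

lemma mM[simp]: "measurable M N = measurable borel N"
  by (rule measurable_cong_sets[OF M(2) refl])

lemma UNIV_a_sets[simp]: "UNIV \<times> {a} \<in> sets (borel :: ('a\<times>'a) measure)"
  by (intro borel_closed closed_Times) auto

lemma ind_meas: "indicator (UNIV \<times> {a}) \<in> borel_measurable (borel :: ('a\<times>'a) measure)"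
  by (rule borel_measurable_indicator, rule UNIV_a_sets)

lemma fst_vimage_sets: "A \<in> sets borel \<Longrightarrow> fst -` A \<in> sets (borel :: ('a\<times>'a) measure)"
  using measurable_sets[OF meas_fst, of A] by simp

lemma snd_vimage_sets: "A \<in> sets borel \<Longrightarrow> snd -` A \<in> sets (borel :: ('a\<times>'a) measure)"
  using measurable_sets[OF meas_snd, of A] by simp

lemma emeasure_kap:
  assumes A: "A \<in> sets borel"
  shows "emeasure (kap a) A = emeasure \<pi> (fst -` A \<inter> (UNIV \<times> {a}))"
proof -
  have "emeasure (kap a) A = emeasure (density \<pi> (indicator (UNIV \<times> {a}))) (fst -` A)"
  proof -
    have mf: "fst \<in> measurable (density \<pi> (indicator (UNIV \<times> {a}))) borel"
      unfolding measurable_cong_sets[OF sets_density refl] mpi by (rule meas_fst)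
    show ?thesis unfolding kap_def emeasure_distr[OF mf A] by simp
  qed
  also have "\<dots> = (\<integral>\<^sup>+ z. indicator (UNIV \<times> {a}) z * indicator (fst -` A) z \<partial>\<pi>)"
  proof -
    have m: "indicator (UNIV \<times> {a}) \<in> borel_measurable \<pi>" by (simp add: ind_meas)
    have s: "fst -` A \<in> sets \<pi>" using fst_vimage_sets[OF A] pi_sets by simp
    show ?thesis using emeasure_density[OF m s] .
  qed
  also have "\<dots> = (\<integral>\<^sup>+ z. indicator (fst -` A \<inter> (UNIV \<times> {a})) z \<partial>\<pi>)"
    by (intro nn_integral_cong) (auto simp: indicator_def)
  also have "\<dots> = emeasure \<pi> (fst -` A \<inter> (UNIV \<times> {a}))"
  proof -
    have s: "fst -` A \<inter> (UNIV \<times> {a}) \<in> sets \<pi>"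
      using sets.Int[OF fst_vimage_sets[OF A] UNIV_a_sets[of a]] pi_sets by simp
    show ?thesis using nn_integral_indicator[OF s] .
  qed
  finally show ?thesis .
qed

lemma ac: "absolutely_continuous M (kap a)"
  unfolding absolutely_continuous_def
proof
  fix A assume "A \<in> null_sets M"
  then have A: "A \<in> sets borel" "emeasure M A = 0" using M(2) by auto
  have "emeasure (kap a) A \<le> emeasure \<pi> (fst -` A)"
    unfolding emeasure_kap[OF A(1)]
    by (rule emeasure_mono) (use fst_vimage_sets[OF A(1)] pi_sets in auto)
  also have "\<dots> = emeasure M A"
    using emeasure_distr[of fst \<pi> borel A] pi_fst A meas_fst[where 'a='a] by simp
  finally show "A \<in> null_sets (kap a)" using A by (intro null_setsI) (auto simp: sets_kap M(2))
qed

lemma B2: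
  assumes h: "h \<in> borel_measurable borel"
  shows "(\<integral>\<^sup>+ y. dens a y * h y \<partial>M) = (\<integral>\<^sup>+ z. indicator (UNIV \<times> {a}) z * h (fst z) \<partial>\<pi>)"
proof -
  interpret prob_space M by (rule M(1))
  have "(\<integral>\<^sup>+ y. dens a y * h y \<partial>M) = integral\<^sup>N (kap a) h"
  proof -
    have hM: "h \<in> borel_measurable M" using h by simp
    show ?thesis unfolding dens_def by (rule RN_deriv_nn_integral[OF ac sets_kap hM, symmetric])
  qed
  also have "\<dots> = (\<integral>\<^sup>+ z. h (fst z) \<partial>density \<pi> (indicator (UNIV \<times> {a})))"
  proof -
    have mf: "fst \<in> measurable (density \<pi> (indicator (UNIV \<times> {a}))) borel"
      unfolding measurable_cong_sets[OF sets_density refl] mpi by (rule meas_fst)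
    have h': "h \<in> borel_measurable (distr (density \<pi> (indicator (UNIV \<times> {a}))) borel fst)"
      unfolding measurable_cong_sets[OF sets_distr refl] by (rule h)
    show ?thesis unfolding kap_def by (rule nn_integral_distr[OF mf h'])
  qed
  also have "\<dots> = (\<integral>\<^sup>+ z. indicator (UNIV \<times> {a}) z * h (fst z) \<partial>\<pi>)"
  proof -
    have m: "indicator (UNIV \<times> {a}) \<in> borel_measurable \<pi>" by (simp add: ind_meas)
    have m2: "(\<lambda>z. h (fst z)) \<in> borel_measurable \<pi>" using h meas_fst[where 'a='a] by simp
    show ?thesis using nn_integral_density[OF m m2] .
  qed
  finally show ?thesis .
qed

lemma dens_meas[measurable]: "dens a \<in> borel_measurable borel"
  using borel_measurable_RN_deriv[of M "kap a"] by (simp add: dens_def)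

lemma S_compl_sets: "- (x ` {..<n}) \<in> sets borel"
  by (intro borel_open) (auto intro: finite_imp_closed)

lemma B0: "AE z in \<pi>. snd z \<in> x ` {..<n}"
proof (rule AE_I')
  have s: "- (x ` {..<n}) \<in> sets borel" by (rule S_compl_sets)
  have "emeasure \<pi> (snd -` (- (x ` {..<n}))) = emeasure (distr \<pi> borel snd) (- (x ` {..<n}))"
    using emeasure_distr[OF meas_snd[where 'a='a, folded mpi] s] by simp
  also have "\<dots> = (\<Sum>l<n. ennreal (w l) * indicator (- (x ` {..<n})) (x l))"
    unfolding pi_snd by (rule emeasure_dm[OF _ s]) simp
  also have "\<dots> = 0" by (intro sum.neutral) auto
  finally show "snd -` (- (x ` {..<n})) \<in> null_sets \<pi>"
    using snd_vimage_sets[OF s] pi_sets by (intro null_setsI) auto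
qed auto

lemma sum_ind_pair:
  fixes f :: "nat \<Rightarrow> ennreal"
  assumes "snd z \<in> x ` {..<n}"
  shows "(\<Sum>l<n. f l * indicator (UNIV \<times> {x l}) z) = f (THE l. l < n \<and> snd z = x l)"
proof -
  obtain k where k: "k < n" "snd z = x k" using assms by auto
  have th: "(THE l. l < n \<and> snd z = x l) = k"
    using k inj by (intro the_equality) (auto simp: inj_on_def)
  have "(\<Sum>l<n. f l * indicator (UNIV \<times> {x l}) z) = (\<Sum>l<n. f l * indicator {x l} (x k))"
    using k by (intro sum.cong refl) (cases z, auto simp: indicator_def)
  also have "\<dots> = f k" by (rule sum_ind_inj[OF inj k(1)])
  finally show ?thesis using th by simp
qed

lemma sum_ind_pair1: "AE z in \<pi>. (\<Sum>l<n. indicator (UNIV \<times> {x l}) z) = (1::ennreal)"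
  using B0
proof eventually_elim
  case (elim z)
  show ?case using sum_ind_pair[OF elim, of "\<lambda>_. 1"] by simp
qed

lemma dens_sum_meas: "(\<lambda>y. \<Sum>l<n. dens (x l) y) \<in> borel_measurable borel"
  by measurable

lemma B3: "AE y in M. (\<Sum>l<n. dens (x l) y) = 1"
proof -
  interpret prob_space M by (rule M(1))
  have eq: "density M (\<lambda>y. \<Sum>l<n. dens (x l) y) = density M (\<lambda>_. 1)"
  proof (rule measure_eqI)
    fix A assume "A \<in> sets (density M (\<lambda>y. \<Sum>l<n. dens (x l) y))"
    then have A: "A \<in> sets borel" by (simp add: M(2))
    have iA: "indicator A \<in> borel_measurable borel" using A by simp
    have "emeasure (density M (\<lambda>y. \<Sum>l<n. dens (x l) y)) A = (\<integral>\<^sup>+ y. (\<Sum>l<n. dens (x l) y) * indicator A y \<partial>M)"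
      using A dens_sum_meas by (subst emeasure_density) (auto simp: M(2))
    also have "\<dots> = (\<Sum>l<n. \<integral>\<^sup>+ y. dens (x l) y * indicator A y \<partial>M)"
      unfolding sum_distrib_right using A by (subst nn_integral_sum) auto
    also have "\<dots> = (\<Sum>l<n. \<integral>\<^sup>+ z. indicator (UNIV \<times> {x l}) z * indicator A (fst z) \<partial>\<pi>)"
      by (intro sum.cong refl B2 iA)
    also have "\<dots> = (\<integral>\<^sup>+ z. (\<Sum>l<n. indicator (UNIV \<times> {x l}) z) * indicator A (fst z) \<partial>\<pi>)"
    proof -
      have e: "(\<lambda>z. indicator A (fst z) :: ennreal) = indicator (fst -` A)" by (auto simp: indicator_def)
      have m: "\<And>l. (\<lambda>z. indicator (UNIV \<times> {x l}) z * indicator A (fst z) :: ennreal) \<in> borel_measurable (borel :: ('a\<times>'a) measure)"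
        apply (rule borel_measurable_times_ennreal)
         apply (rule ind_meas)
        apply (subst e)
        apply (rule borel_measurable_indicator)
        apply (rule fst_vimage_sets[OF A])
        done
      show ?thesis unfolding sum_distrib_right using m by (subst nn_integral_sum) auto
    qed
    also have "\<dots> = (\<integral>\<^sup>+ z. indicator (fst -` A) z \<partial>\<pi>)"
      by (intro nn_integral_cong_AE) (use sum_ind_pair1 in eventually_elim, simp add: indicator_def)
    also have "\<dots> = emeasure M A"
      using fst_vimage_sets[OF A] pi_sets emeasure_pi_fst[OF A] by simp
    also have "\<dots> = emeasure (density M (\<lambda>_. 1)) A"
      using A by (subst emeasure_density) (auto simp: M(2))
    finally show "emeasure (density M (\<lambda>y. \<Sum>l<n. dens (x l) y)) A = emeasure (density M (\<lambda>_. 1)) A" .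
  qed simp
  show ?thesis using density_unique[OF _ _ eq] dens_sum_meas by simp
qed

lemma meas_pair_const: "(\<lambda>y. (y, a)) \<in> borel_measurable (borel :: 'a measure)"
  by (intro borel_measurable_continuous_onI continuous_intros)

lemma meas_pair_fst_const: "(\<lambda>z. (fst z, a)) \<in> borel_measurable (borel :: ('a\<times>'a) measure)"
  by (intro borel_measurable_continuous_onI continuous_intros)

lemma B4:
  fixes c :: "'a \<times> 'a \<Rightarrow> ennreal"
  assumes c: "c \<in> borel_measurable borel"
  shows "(\<integral>\<^sup>+ z. c z \<partial>\<pi>) = (\<Sum>l<n. \<integral>\<^sup>+ y. dens (x l) y * c (y, x l) \<partial>M)"
proof -
  have "(\<integral>\<^sup>+ z. c z \<partial>\<pi>) = (\<integral>\<^sup>+ z. (\<Sum>l<n. c (fst z, x l) * indicator (UNIV \<times> {x l}) z) \<partial>\<pi>)"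
  proof (intro nn_integral_cong_AE)
    show "AE z in \<pi>. c z = (\<Sum>l<n. c (fst z, x l) * indicator (UNIV \<times> {x l}) z)"
      using B0
    proof eventually_elim
      case (elim z)
      obtain k where k: "k < n" "snd z = x k" using elim by auto
      have th: "(THE l. l < n \<and> snd z = x l) = k"
        using k inj by (intro the_equality) (auto simp: inj_on_def)
      show ?case using sum_ind_pair[OF elim, of "\<lambda>l. c (fst z, x l)"] th k
        by (cases z) simp
    qed
  qed
  also have "\<dots> = (\<Sum>l<n. \<integral>\<^sup>+ z. indicator (UNIV \<times> {x l}) z * c (fst z, x l) \<partial>\<pi>)"
  proof -
    have m: "\<And>l. (\<lambda>z. c (fst z, x l) * indicator (UNIV \<times> {x l}) z) \<in> borel_measurable \<pi>"
      unfolding mpi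
      apply (rule borel_measurable_times_ennreal)
       apply (rule measurable_compose[OF meas_pair_fst_const c])
      apply (rule ind_meas)
      done
    show ?thesis using m by (subst nn_integral_sum) (auto simp: mult.commute)
  qed
  also have "\<dots> = (\<Sum>l<n. \<integral>\<^sup>+ y. dens (x l) y * c (y, x l) \<partial>M)"
    by (intro sum.cong refl B2[symmetric] measurable_compose[OF meas_pair_const c])
  finally show ?thesis .
qed

lemma B5:
  assumes l: "l < n"
  shows "(\<integral>\<^sup>+ y. dens (x l) y \<partial>M) = ennreal (w l)"
proof -
  have "(\<integral>\<^sup>+ y. dens (x l) y \<partial>M) = (\<integral>\<^sup>+ y. dens (x l) y * 1 \<partial>M)" by simp
  also have "\<dots> = (\<integral>\<^sup>+ z. indicator (UNIV \<times> {x l}) z * 1 \<partial>\<pi>)"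
    by (rule B2) simp
  also have "\<dots> = emeasure \<pi> (snd -` {x l})"
  proof -
    have s: "snd -` {x l} \<in> sets \<pi>" using snd_vimage_sets[of "{x l}"] pi_sets by simp
    have "(\<lambda>z. indicator (UNIV \<times> {x l}) z * (1::ennreal)) = indicator (snd -` {x l})"
      by (auto simp: indicator_def fun_eq_iff)
    then show ?thesis using nn_integral_indicator[OF s] by metis
  qed
  also have "\<dots> = emeasure (distr \<pi> borel snd) {x l}"
    using emeasure_distr[OF meas_snd[where 'a='a, folded mpi], of "{x l}"] by simp
  also have "\<dots> = (\<Sum>k<n. ennreal (w k) * indicator {x l} (x k))"
    unfolding pi_snd by (rule emeasure_dm) auto
  also have "\<dots> = (\<Sum>k<n. ennreal (w k) * indicator {x k} (x l))"
    by (intro sum.cong refl) (auto simp: indicator_def)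
  also have "\<dots> = ennreal (w l)" by (rule sum_ind_inj[OF inj l])
  finally show ?thesis .
qed

end


lemma norm_diff_sq: "norm (a - b :: 'a::real_inner)^2 = norm a ^2 + norm b ^2 - 2 * inner a b"
  by (simp add: power2_norm_eq_inner inner_diff_left inner_diff_right inner_commute)

lemma norm_sum_sq: "norm (\<Sum>i\<in>I. q i *\<^sub>R (b i :: 'a::real_inner))^2 = (\<Sum>i\<in>I. \<Sum>k\<in>I. q i * (q k * inner (b k) (b i)))"
  unfolding power2_norm_eq_inner inner_sum_left inner_sum_right by (simp add: mult.assoc)

lemma cs_sum:
  fixes b :: "nat \<Rightarrow> 'a::real_inner"
  assumes "\<forall>i\<in>I. 0 \<le> q i"
  shows "norm (\<Sum>i\<in>I. q i *\<^sub>R b i)^2 \<le> (\<Sum>i\<in>I. q i) * (\<Sum>i\<in>I. q i * norm (b i)^2)"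
proof -
  have "0 \<le> (\<Sum>i\<in>I. \<Sum>k\<in>I. q i * q k * norm (b i - b k)^2)"
    using assms by (intro sum_nonneg) auto
  also have "\<dots> = (\<Sum>i\<in>I. \<Sum>k\<in>I. q i * q k * norm (b i)^2 + q i * q k * norm (b k)^2 - 2 * (q i * q k * inner (b i) (b k)))"
    by (simp add: norm_diff_sq algebra_simps)
  also have "\<dots> = (\<Sum>i\<in>I. \<Sum>k\<in>I. q i * q k * norm (b i)^2) + (\<Sum>i\<in>I. \<Sum>k\<in>I. q i * q k * norm (b k)^2)
      - 2 * (\<Sum>i\<in>I. \<Sum>k\<in>I. q i * q k * inner (b i) (b k))"
    by (simp only: sum.distrib sum_subtractf sum_distrib_left)
  also have "(\<Sum>i\<in>I. \<Sum>k\<in>I. q i * q k * norm (b k)^2) = (\<Sum>k\<in>I. \<Sum>i\<in>I. q i * q k * norm (b k)^2)"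
    by (rule sum.swap)
  also have "\<dots> = (\<Sum>i\<in>I. \<Sum>k\<in>I. q i * q k * norm (b i)^2)"
    by (intro sum.cong refl) (simp add: mult.commute)
  also have "(\<Sum>i\<in>I. \<Sum>k\<in>I. q i * q k * norm (b i)^2) = (\<Sum>i\<in>I. q i * norm (b i)^2 * (\<Sum>k\<in>I. q k))"
    apply (intro sum.cong refl) apply (subst sum_distrib_left) apply (intro sum.cong refl) apply (simp add: algebra_simps) done
  also have "\<dots> = (\<Sum>i\<in>I. q i) * (\<Sum>i\<in>I. q i * norm (b i)^2)"
    by (simp add: sum_distrib_left mult.commute)
  also have "(\<Sum>i\<in>I. \<Sum>k\<in>I. q i * q k * inner (b i) (b k)) = (\<Sum>i\<in>I. \<Sum>k\<in>I. q i * (q k * inner (b k) (b i)))"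
    by (intro sum.cong refl) (simp add: inner_commute mult.assoc)
  finally show ?thesis unfolding norm_sum_sq by simp
qed

lemma sum_skip:
  fixes h :: "nat \<Rightarrow> 'b::comm_monoid_add"
  assumes "finite I"
  shows "(\<Sum>i\<in>I. if i = j then 0 else h i) = (\<Sum>i\<in>I-{j}. h i)"
  using assms by (simp add: sum.If_cases Diff_eq)

lemma sum_remove_j:
  fixes h :: "nat \<Rightarrow> real"
  assumes "finite I" "j \<in> I"
  shows "(\<Sum>i\<in>I. h i) = h j + (\<Sum>i\<in>I-{j}. h i)"
  using assms by (simp add: sum.remove)

lemma ineq1_i:
  fixes lam u E :: "nat \<Rightarrow> real"
  assumes lp: "\<forall>i<N. 0 < lam i" and ls: "(\<Sum>i<N. lam i) = 1" and j: "j < N"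
    and u: "\<forall>i<N. 0 \<le> u i" and E: "\<forall>i<N. i \<noteq> j \<longrightarrow> E i \<le> u j + u i"
  shows "(\<Sum>i<N. lam i * (if i = j then 0 else E i)) \<le> (1 / lam j) * (\<Sum>i<N. lam i * u i)"
proof -
  let ?I = "{..<N} - {j}"
  have "(\<Sum>i<N. lam i * (if i = j then 0 else E i)) = (\<Sum>i\<in>?I. lam i * E i)"
    by (simp add: sum_skip[symmetric] if_distrib cong: if_cong)
  also have "\<dots> \<le> (\<Sum>i\<in>?I. lam i * (u j + u i))"
    using lp E by (intro sum_mono mult_left_mono) auto
  also have "\<dots> = (\<Sum>i\<in>?I. lam i) * u j + (\<Sum>i\<in>?I. lam i * u i)"
  proof -
    have "(\<Sum>i\<in>?I. lam i * (u j + u i)) = (\<Sum>i\<in>?I. lam i * u j) + (\<Sum>i\<in>?I. lam i * u i)"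
      by (simp add: distrib_left sum.distrib)
    moreover have "(\<Sum>i\<in>?I. lam i * u j) = (\<Sum>i\<in>?I. lam i) * u j" by (rule sum_distrib_right[symmetric])
    ultimately show ?thesis by simp
  qed
  finally have L: "(\<Sum>i<N. lam i * (if i = j then 0 else E i)) \<le> (\<Sum>i\<in>?I. lam i) * u j + (\<Sum>i\<in>?I. lam i * u i)" .
  have s1: "(\<Sum>i\<in>?I. lam i) = 1 - lam j" using ls sum_remove_j[of "{..<N}" j lam] j by simp
  have V0: "0 \<le> (\<Sum>i\<in>?I. lam i * u i)" using lp u by (intro sum_nonneg) auto
  have S: "(\<Sum>i<N. lam i * u i) = lam j * u j + (\<Sum>i\<in>?I. lam i * u i)"
    using sum_remove_j[of "{..<N}" j "\<lambda>i. lam i * u i"] j by simp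
  have "0 \<le> (\<Sum>i\<in>?I. lam i)" using lp by (intro sum_nonneg) auto
  then have lj: "0 < lam j" "lam j \<le> 1" using lp j s1 by auto
  have "(1 - lam j) * u j + (\<Sum>i\<in>?I. lam i * u i) \<le> u j + (\<Sum>i\<in>?I. lam i * u i) / lam j"
  proof -
    have "(\<Sum>i\<in>?I. lam i * u i) \<le> (\<Sum>i\<in>?I. lam i * u i) / lam j"
      using lj V0 by (simp add: le_divide_eq mult_left_le)
    moreover have "(1 - lam j) * u j \<le> u j" using lj u j by (simp add: mult_left_le_one_le)
    ultimately show ?thesis by linarith
  qed
  also have "\<dots> = (1 / lam j) * (\<Sum>i<N. lam i * u i)"
    unfolding S using lj by (simp add: field_simps)
  finally show ?thesis using L unfolding s1 by linarith
qed

lemma ineq1_iii: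
  fixes lam u :: "nat \<Rightarrow> real" and E :: "nat \<Rightarrow> nat \<Rightarrow> real"
  assumes lp: "\<forall>i<N. 0 < lam i" and ls: "(\<Sum>i<N. lam i) = 1"
    and u: "\<forall>i<N. 0 \<le> u i" and E: "\<forall>j<N. \<forall>i<N. i \<noteq> j \<longrightarrow> E j i \<le> u j + u i"
  shows "(\<Sum>j<N. lam j * (\<Sum>i<N. lam i * (if i = j then 0 else E j i))) \<le> 2 * (\<Sum>i<N. lam i * u i)"
proof -
  have "(\<Sum>j<N. lam j * (\<Sum>i<N. lam i * (if i = j then 0 else E j i)))
      \<le> (\<Sum>j<N. lam j * (\<Sum>i<N. lam i * (u j + u i)))"
    using lp E u by (intro sum_mono mult_left_mono) (auto simp: less_imp_le)
  also have "\<dots> = (\<Sum>j<N. lam j * (u j + (\<Sum>i<N. lam i * u i)))"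
  proof (intro sum.cong refl)
    fix j
    have "(\<Sum>i<N. lam i * (u j + u i)) = (\<Sum>i<N. lam i * u j) + (\<Sum>i<N. lam i * u i)"
      by (simp add: distrib_left sum.distrib)
    also have "(\<Sum>i<N. lam i * u j) = (\<Sum>i<N. lam i) * u j" by (rule sum_distrib_right[symmetric])
    finally show "lam j * (\<Sum>i<N. lam i * (u j + u i)) = lam j * (u j + (\<Sum>i<N. lam i * u i))"
      using ls by simp
  qed
  also have "\<dots> = (\<Sum>j<N. lam j * u j) + (\<Sum>j<N. lam j) * (\<Sum>i<N. lam i * u i)"
    by (simp add: distrib_left sum.distrib sum_distrib_right)
  also have "\<dots> = 2 * (\<Sum>i<N. lam i * u i)" using ls by simp
  finally show ?thesis .
qed

lemma ineq2_i:
  fixes lam v E :: "nat \<Rightarrow> real" and a :: "nat \<Rightarrow> 'a::real_inner"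
  assumes lp: "\<forall>i<N. 0 < lam i" and ls: "(\<Sum>i<N. lam i) = 1" and j: "j < N"
    and av: "\<forall>i<N. norm (a i)^2 \<le> v i"
    and E: "\<forall>i<N. i \<noteq> j \<longrightarrow> E i = v j + v i - 2 * inner (a j) (a i)"
  shows "(\<Sum>i<N. lam i * (if i = j then 0 else E i)) \<le> (1 / lam j) * (\<Sum>i<N. lam i * v i)"
proof -
  let ?I = "{..<N} - {j}"
  define L where "L = (\<Sum>i\<in>?I. lam i)"
  define V where "V = (\<Sum>i\<in>?I. lam i * v i)"
  define s where "s = (\<Sum>i\<in>?I. lam i *\<^sub>R a i)"
  define X where "X = inner (a j) s"
  have "(\<Sum>i<N. lam i * (if i = j then 0 else E i)) = (\<Sum>i\<in>?I. lam i * E i)"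
    by (simp add: sum_skip[symmetric] if_distrib cong: if_cong)
  also have "\<dots> = (\<Sum>i\<in>?I. lam i * v j + lam i * v i - 2 * (lam i * inner (a j) (a i)))"
  proof (intro sum.cong refl)
    fix i assume "i \<in> ?I"
    then have "E i = v j + v i - 2 * inner (a j) (a i)" using E by auto
    then show "lam i * E i = lam i * v j + lam i * v i - 2 * (lam i * inner (a j) (a i))"
      by (simp add: ring_distribs mult.left_commute)
  qed
  also have "\<dots> = L * v j + V - 2 * X"
    unfolding L_def V_def X_def s_def
    by (simp add: sum.distrib sum_subtractf sum_distrib_left sum_distrib_right inner_sum_right)
  finally have LHS: "(\<Sum>i<N. lam i * (if i = j then 0 else E i)) = L * v j + V - 2 * X" .
  have Ls: "L = 1 - lam j" unfolding L_def using ls sum_remove_j[of "{..<N}" j lam] j by simp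
  have S: "(\<Sum>i<N. lam i * v i) = lam j * v j + V"
    unfolding V_def using sum_remove_j[of "{..<N}" j "\<lambda>i. lam i * v i"] j by simp
  have lj: "0 < lam j" using lp j by auto
  have "norm s ^2 \<le> L * (\<Sum>i\<in>?I. lam i * norm (a i)^2)"
    unfolding s_def L_def by (rule cs_sum) (use lp in auto)
  also have "\<dots> \<le> L * V"
  proof -
    have "0 \<le> L" unfolding L_def using lp by (intro sum_nonneg) auto
    moreover have "(\<Sum>i\<in>?I. lam i * norm (a i)^2) \<le> V"
      unfolding V_def using lp av by (intro sum_mono mult_left_mono) auto
    ultimately show ?thesis by (rule mult_left_mono[rotated])
  qed
  finally have cs: "norm s ^2 \<le> L * V" .
  have sq: "0 \<le> norm (lam j *\<^sub>R a j + s)^2" by simp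
  also have "norm (lam j *\<^sub>R a j + s)^2 = (lam j)^2 * norm (a j)^2 + 2 * lam j * X + norm s ^2"
    unfolding X_def power2_norm_eq_inner by (simp add: inner_add_left inner_add_right inner_commute algebra_simps power2_eq_square)
  finally have sq': "0 \<le> (lam j)^2 * norm (a j)^2 + 2 * lam j * X + norm s ^2" .
  have "(lam j)^2 * norm (a j)^2 \<le> (lam j)^2 * v j" using av j by (intro mult_left_mono) auto
  with sq' cs have F: "0 \<le> (lam j)^2 * v j + 2 * lam j * X + L * V" by linarith
  have "lam j * (L * v j + V - 2 * X) = (lam j * v j + V) - ((lam j)^2 * v j + 2 * lam j * X + L * V)"
    unfolding Ls by (simp add: algebra_simps power2_eq_square)
  with F have "lam j * (L * v j + V - 2 * X) \<le> lam j * v j + V" by linarith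
  then have "L * v j + V - 2 * X \<le> (lam j * v j + V) / lam j"
    using lj by (simp add: pos_le_divide_eq mult.commute)
  then show ?thesis unfolding LHS S by simp
qed

lemma ineq2_iii:
  fixes lam v :: "nat \<Rightarrow> real" and E :: "nat \<Rightarrow> nat \<Rightarrow> real" and a :: "nat \<Rightarrow> 'a::real_inner"
  assumes lp: "\<forall>i<N. 0 < lam i" and ls: "(\<Sum>i<N. lam i) = 1"
    and av: "\<forall>i<N. norm (a i)^2 \<le> v i"
    and E: "\<forall>j<N. \<forall>i<N. i \<noteq> j \<longrightarrow> E j i = v j + v i - 2 * inner (a j) (a i)"
  shows "(\<Sum>j<N. lam j * (\<Sum>i<N. lam i * (if i = j then 0 else E j i))) \<le> 2 * (\<Sum>i<N. lam i * v i)"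
proof -
  let ?S = "(\<Sum>i<N. lam i * v i)"
  have "(\<Sum>j<N. lam j * (\<Sum>i<N. lam i * (if i = j then 0 else E j i)))
      \<le> (\<Sum>j<N. lam j * (\<Sum>i<N. lam i * (v j + v i - 2 * inner (a j) (a i))))"
  proof (intro sum_mono mult_left_mono)
    fix j i assume j: "j \<in> {..<N}" and i: "i \<in> {..<N}"
    show "(if i = j then 0 else E j i) \<le> v j + v i - 2 * inner (a j) (a i)"
    proof (cases "i = j")
      case True
      then show ?thesis using av j by (simp add: power2_norm_eq_inner)
    qed (use E i j in auto)
  qed (use lp in \<open>auto simp: less_imp_le\<close>)
  also have "\<dots> = (\<Sum>j<N. lam j * (v j + ?S - 2 * inner (a j) (\<Sum>i<N. lam i *\<^sub>R a i)))"
  proof (intro sum.cong refl)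
    fix j
    have "(\<Sum>i<N. lam i * (v j + v i - 2 * inner (a j) (a i)))
        = (\<Sum>i<N. lam i) * v j + ?S - 2 * (\<Sum>i<N. lam i * inner (a j) (a i))"
      by (simp add: sum.distrib sum_subtractf sum_distrib_left sum_distrib_right algebra_simps)
    also have "(\<Sum>i<N. lam i * inner (a j) (a i)) = inner (a j) (\<Sum>i<N. lam i *\<^sub>R a i)"
      by (simp add: inner_sum_right)
    finally show "lam j * (\<Sum>i<N. lam i * (v j + v i - 2 * inner (a j) (a i)))
        = lam j * (v j + ?S - 2 * inner (a j) (\<Sum>i<N. lam i *\<^sub>R a i))" using ls by simp
  qed
  also have "\<dots> = 2 * ?S - 2 * norm (\<Sum>i<N. lam i *\<^sub>R a i)^2"
  proof -
    define S where "S = ?S"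
    define A where "A = (\<Sum>i<N. lam i *\<^sub>R a i)"
    have "(\<Sum>j<N. lam j * (v j + S - 2 * inner (a j) A)) = ?S + (\<Sum>j<N. lam j) * S - 2 * (\<Sum>j<N. lam j * inner (a j) A)"
      by (simp add: sum.distrib sum_subtractf sum_distrib_left sum_distrib_right ring_distribs mult.left_commute)
    also have "(\<Sum>j<N. lam j * inner (a j) A) = inner A A" unfolding A_def by (simp add: inner_sum_left)
    finally show ?thesis using ls unfolding S_def A_def by (simp add: power2_norm_eq_inner)
  qed
  finally show ?thesis using zero_le_power2[of "norm (\<Sum>i<N. lam i *\<^sub>R a i)"] by linarith
qed

lemma double_sum_split:
  fixes r1 r2 A B :: "nat \<Rightarrow> real"
  shows "(\<Sum>l<n1. \<Sum>m<n2. r1 l * r2 m * (A l + B m)) = (\<Sum>l<n1. r1 l * A l) * (\<Sum>m<n2. r2 m) + (\<Sum>l<n1. r1 l) * (\<Sum>m<n2. r2 m * B m)"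
proof -
  have 1: "(\<Sum>l<n1. \<Sum>m<n2. r1 l * r2 m * (A l + B m)) = (\<Sum>l<n1. \<Sum>m<n2. r1 l * A l * r2 m) + (\<Sum>l<n1. r1 l * (\<Sum>m<n2. r2 m * B m))"
    by (simp add: sum.distrib sum_distrib_left algebra_simps)
  have 2: "(\<Sum>l<n1. \<Sum>m<n2. r1 l * A l * r2 m) = (\<Sum>l<n1. r1 l * A l) * (\<Sum>m<n2. r2 m)"
    unfolding sum_distrib_right by (intro sum.cong refl) (simp add: sum_distrib_left)
  have 3: "(\<Sum>l<n1. r1 l * (\<Sum>m<n2. r2 m * B m)) = (\<Sum>l<n1. r1 l) * (\<Sum>m<n2. r2 m * B m)"
    by (simp add: sum_distrib_right)
  show ?thesis unfolding 1 2 3 ..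
qed

lemma Ec1_le:
  fixes z :: "nat \<Rightarrow> nat \<Rightarrow> 'a::real_normed_vector"
  assumes r: "\<forall>l<n j. 0 \<le> r j l" "\<forall>m<n i. 0 \<le> r i m"
    and s: "(\<Sum>l<n j. r j l) = 1" "(\<Sum>m<n i. r i m) = 1"
  shows "(\<Sum>l<n j. \<Sum>m<n i. r j l * r i m * norm (z j l - z i m) powr 1)
    \<le> (\<Sum>l<n j. r j l * norm (y - z j l) powr 1) + (\<Sum>m<n i. r i m * norm (y - z i m) powr 1)"
proof -
  have "(\<Sum>l<n j. \<Sum>m<n i. r j l * r i m * norm (z j l - z i m) powr 1)
      \<le> (\<Sum>l<n j. \<Sum>m<n i. r j l * r i m * (norm (y - z j l) + norm (y - z i m)))"
  proof (intro sum_mono mult_left_mono)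
    fix l m assume "l \<in> {..<n j}" "m \<in> {..<n i}"
    show "norm (z j l - z i m) powr 1 \<le> norm (y - z j l) + norm (y - z i m)"
      using norm_triangle_ineq4[of "y - z i m" "y - z j l"] by (simp add: norm_minus_commute)
    show "0 \<le> r j l * r i m" using r \<open>l \<in> _\<close> \<open>m \<in> _\<close> by auto
  qed
  also have "\<dots> = (\<Sum>l<n j. r j l * norm (y - z j l) powr 1) + (\<Sum>m<n i. r i m * norm (y - z i m) powr 1)"
    unfolding double_sum_split using s by simp
  finally show ?thesis .
qed

lemma Ec2_eq:
  fixes z :: "nat \<Rightarrow> nat \<Rightarrow> 'a::real_inner"
  assumes s: "(\<Sum>l<n j. r j l) = 1" "(\<Sum>m<n i. r i m) = 1"
  shows "(\<Sum>l<n j. \<Sum>m<n i. r j l * r i m * norm (z j l - z i m) powr 2)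
    = (\<Sum>l<n j. r j l * norm (y - z j l) powr 2) + (\<Sum>m<n i. r i m * norm (y - z i m) powr 2)
      - 2 * inner (\<Sum>l<n j. r j l *\<^sub>R (z j l - y)) (\<Sum>m<n i. r i m *\<^sub>R (z i m - y))"
proof -
  have "(\<Sum>l<n j. \<Sum>m<n i. r j l * r i m * norm (z j l - z i m) powr 2)
      = (\<Sum>l<n j. \<Sum>m<n i. r j l * r i m * (norm (y - z j l)^2 + norm (y - z i m)^2)
            - 2 * (r j l * r i m * inner (z j l - y) (z i m - y)))"
  proof (intro sum.cong refl)
    fix l m
    have "z j l - z i m = (z j l - y) - (z i m - y)" by simp
    then have "norm (z j l - z i m)^2 = norm (y - z j l)^2 + norm (y - z i m)^2 - 2 * inner (z j l - y) (z i m - y)"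
      by (simp only: norm_diff_sq) (simp add: norm_minus_commute inner_commute)
    then have h: "norm (z j l - z i m) powr 2 = norm (y - z j l)^2 + norm (y - z i m)^2 - 2 * inner (z j l - y) (z i m - y)"
      by simp
    have lin3: "\<And>c P Q I :: real. c * (P + Q - 2 * I) = c * (P + Q) - 2 * (c * I)" by (simp add: algebra_simps)
    show "r j l * r i m * norm (z j l - z i m) powr 2 = r j l * r i m * (norm (y - z j l)^2 + norm (y - z i m)^2)
            - 2 * (r j l * r i m * inner (z j l - y) (z i m - y))"
      unfolding h by (rule lin3)
  qed
  also have "\<dots> = (\<Sum>l<n j. \<Sum>m<n i. r j l * r i m * (norm (y - z j l)^2 + norm (y - z i m)^2))
            - 2 * (\<Sum>l<n j. \<Sum>m<n i. r j l * r i m * inner (z j l - y) (z i m - y))"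
    by (simp add: sum_subtractf sum_distrib_left)
  also have "(\<Sum>l<n j. \<Sum>m<n i. r j l * r i m * (norm (y - z j l)^2 + norm (y - z i m)^2))
     = (\<Sum>l<n j. r j l * norm (y - z j l) powr 2) + (\<Sum>m<n i. r i m * norm (y - z i m) powr 2)"
    unfolding double_sum_split using s by simp
  also have "(\<Sum>l<n j. \<Sum>m<n i. r j l * r i m * inner (z j l - y) (z i m - y))
     = inner (\<Sum>l<n j. r j l *\<^sub>R (z j l - y)) (\<Sum>m<n i. r i m *\<^sub>R (z i m - y))"
    unfolding inner_sum_left unfolding inner_sum_right by (simp add: mult.assoc mult.left_commute)
  finally show ?thesis .
qed

lemma a_le_v:
  fixes z :: "nat \<Rightarrow> nat \<Rightarrow> 'a::real_inner"
  assumes r: "\<forall>l<n i. 0 \<le> r i l" and s: "(\<Sum>l<n i. r i l) = 1"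
  shows "norm (\<Sum>l<n i. r i l *\<^sub>R (z i l - y))^2 \<le> (\<Sum>l<n i. r i l * norm (y - z i l) powr 2)"
  using cs_sum[of "{..<n i}" "r i" "\<lambda>l. z i l - y"] r s by (simp add: norm_minus_commute)

lemma pw_i:
  fixes z :: "nat \<Rightarrow> nat \<Rightarrow> 'a::real_inner" and lam :: "nat \<Rightarrow> real" and p :: real
  assumes p: "p = 1 \<or> p = 2" and lp: "\<forall>i<N. 0 < lam i" and ls: "(\<Sum>i<N. lam i) = 1" and j: "j < N"
    and r: "\<forall>i<N. \<forall>l<n i. 0 \<le> r i l" and s: "\<forall>i<N. (\<Sum>l<n i. r i l) = 1"
  shows "(\<Sum>i<N. lam i * (if i = j then 0 else (\<Sum>l<n j. \<Sum>m<n i. r j l * r i m * norm (z j l - z i m) powr p)))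
     \<le> (1 / lam j) * (\<Sum>i<N. lam i * (\<Sum>l<n i. r i l * norm (y - z i l) powr p))"
  using p
proof
  assume p1: "p = 1"
  show ?thesis unfolding p1
  proof (rule ineq1_i[OF lp ls j])
    show "\<forall>i<N. 0 \<le> (\<Sum>l<n i. r i l * norm (y - z i l) powr 1)"
      using r by (auto intro!: sum_nonneg)
    show "\<forall>i<N. i \<noteq> j \<longrightarrow> (\<Sum>l<n j. \<Sum>m<n i. r j l * r i m * norm (z j l - z i m) powr 1)
        \<le> (\<Sum>l<n j. r j l * norm (y - z j l) powr 1) + (\<Sum>l<n i. r i l * norm (y - z i l) powr 1)"
      using r s j by (intro allI impI Ec1_le) auto
  qed
next
  assume p2: "p = 2"
  show ?thesis unfolding p2
  proof (rule ineq2_i[OF lp ls j, where a="\<lambda>i. \<Sum>l<n i. r i l *\<^sub>R (z i l - y)"])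
    show "\<forall>i<N. norm (\<Sum>l<n i. r i l *\<^sub>R (z i l - y))^2 \<le> (\<Sum>l<n i. r i l * norm (y - z i l) powr 2)"
      using r s by (intro allI impI a_le_v) auto
    show "\<forall>i<N. i \<noteq> j \<longrightarrow> (\<Sum>l<n j. \<Sum>m<n i. r j l * r i m * norm (z j l - z i m) powr 2)
        = (\<Sum>l<n j. r j l * norm (y - z j l) powr 2) + (\<Sum>l<n i. r i l * norm (y - z i l) powr 2)
          - 2 * inner (\<Sum>l<n j. r j l *\<^sub>R (z j l - y)) (\<Sum>l<n i. r i l *\<^sub>R (z i l - y))"
      using s j by (intro allI impI Ec2_eq) auto
  qed
qed

lemma pw_iii:
  fixes z :: "nat \<Rightarrow> nat \<Rightarrow> 'a::real_inner" and lam :: "nat \<Rightarrow> real" and p :: real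
  assumes p: "p = 1 \<or> p = 2" and lp: "\<forall>i<N. 0 < lam i" and ls: "(\<Sum>i<N. lam i) = 1"
    and r: "\<forall>i<N. \<forall>l<n i. 0 \<le> r i l" and s: "\<forall>i<N. (\<Sum>l<n i. r i l) = 1"
  shows "(\<Sum>j<N. lam j * (\<Sum>i<N. lam i * (if i = j then 0 else (\<Sum>l<n j. \<Sum>m<n i. r j l * r i m * norm (z j l - z i m) powr p))))
     \<le> 2 * (\<Sum>i<N. lam i * (\<Sum>l<n i. r i l * norm (y - z i l) powr p))"
  using p
proof
  assume p1: "p = 1"
  show ?thesis unfolding p1
  proof (rule ineq1_iii[OF lp ls])
    show "\<forall>i<N. 0 \<le> (\<Sum>l<n i. r i l * norm (y - z i l) powr 1)"
      using r by (auto intro!: sum_nonneg)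
    show "\<forall>j<N. \<forall>i<N. i \<noteq> j \<longrightarrow> (\<Sum>l<n j. \<Sum>m<n i. r j l * r i m * norm (z j l - z i m) powr 1)
        \<le> (\<Sum>l<n j. r j l * norm (y - z j l) powr 1) + (\<Sum>l<n i. r i l * norm (y - z i l) powr 1)"
      using r s by (intro allI impI Ec1_le) auto
  qed
next
  assume p2: "p = 2"
  show ?thesis unfolding p2
  proof (rule ineq2_iii[OF lp ls, where a="\<lambda>i. \<Sum>l<n i. r i l *\<^sub>R (z i l - y)"])
    show "\<forall>i<N. norm (\<Sum>l<n i. r i l *\<^sub>R (z i l - y))^2 \<le> (\<Sum>l<n i. r i l * norm (y - z i l) powr 2)"
      using r s by (intro allI impI a_le_v) auto
    show "\<forall>j<N. \<forall>i<N. i \<noteq> j \<longrightarrow> (\<Sum>l<n j. \<Sum>m<n i. r j l * r i m * norm (z j l - z i m) powr 2)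
        = (\<Sum>l<n j. r j l * norm (y - z j l) powr 2) + (\<Sum>l<n i. r i l * norm (y - z i l) powr 2)
          - 2 * inner (\<Sum>l<n j. r j l *\<^sub>R (z j l - y)) (\<Sum>l<n i. r i l *\<^sub>R (z i l - y))"
      using s by (intro allI impI Ec2_eq) auto
  qed
qed


lemma H_ennreal:
  assumes "\<forall>i\<in>I. 0 \<le> a i" "\<forall>i\<in>I. 0 \<le> b i"
  shows "(\<Sum>i\<in>I. ennreal (a i) * ennreal (b i)) = ennreal (\<Sum>i\<in>I. a i * b i)"
proof -
  have "(\<Sum>i\<in>I. ennreal (a i) * ennreal (b i)) = (\<Sum>i\<in>I. ennreal (a i * b i))"
    using assms by (intro sum.cong refl) (simp add: ennreal_mult)
  also have "\<dots> = ennreal (\<Sum>i\<in>I. a i * b i)" using assms by (subst sum_ennreal) auto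
  finally show ?thesis .
qed

lemma sum2_ennreal:
  fixes n1 n2 :: nat
  assumes "\<forall>l<n1. \<forall>m<n2. 0 \<le> g l m"
  shows "(\<Sum>l<n1. \<Sum>m<n2. ennreal (g l m)) = ennreal (\<Sum>l<n1. \<Sum>m<n2. g l m)"
proof -
  have "(\<Sum>l<n1. \<Sum>m<n2. ennreal (g l m)) = (\<Sum>l<n1. ennreal (\<Sum>m<n2. g l m))"
    using assms by (intro sum.cong refl) (subst sum_ennreal, auto)
  also have "\<dots> = ennreal (\<Sum>l<n1. \<Sum>m<n2. g l m)"
    using assms by (subst sum_ennreal) (auto intro!: sum_nonneg)
  finally show ?thesis .
qed

lemma wass_le: "\<gamma> \<in> couplings \<mu> \<nu> \<Longrightarrow> wass_pp p \<mu> \<nu> \<le> (\<integral>\<^sup>+ z. ennreal (norm (fst z - snd z) powr p) \<partial>\<gamma>)"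
  unfolding wass_pp_def by (rule INF_lower)

lemma cost_dm:
  fixes pts :: "'i \<Rightarrow> 'a::euclidean_space \<times> 'a"
  assumes "finite I"
  shows "(\<integral>\<^sup>+ z. ennreal (norm (fst z - snd z) powr p) \<partial>dm I g pts) = (\<Sum>k\<in>I. g k * ennreal (norm (fst (pts k) - snd (pts k)) powr p))"
  by (rule nn_integral_dm[OF assms meas_cost])

locale bsetup =
  fixes p :: real and N :: nat and lam :: "nat \<Rightarrow> real" and n :: "nat \<Rightarrow> nat"
    and w :: "nat \<Rightarrow> nat \<Rightarrow> real" and x :: "nat \<Rightarrow> nat \<Rightarrow> 'a::euclidean_space"
    and mu :: "nat \<Rightarrow> 'a measure" and nuhat :: "'a measure" and \<pi> :: "nat \<Rightarrow> ('a \<times> 'a) measure"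
  assumes p: "p = 1 \<or> p = 2"
    and lam_pos: "\<forall>i<N. 0 < lam i" and lam_sum: "(\<Sum>i<N. lam i) = 1"
    and w_pos: "\<forall>i<N. \<forall>l<n i. 0 < w i l" and w_sum: "\<forall>i<N. (\<Sum>l<n i. w i l) = 1"
    and x_inj: "\<forall>i<N. inj_on (x i) {..<n i}"
    and mu: "\<forall>i<N. mu i = dm {..<n i} (\<lambda>l. ennreal (w i l)) (x i)"
    and nu: "prob_space nuhat" "sets nuhat = sets borel"
    and pi: "\<forall>i<N. \<pi> i \<in> couplings nuhat (mu i)"
begin

lemma cpl_i: "i < N \<Longrightarrow> cpl nuhat (\<pi> i) (n i) (w i) (x i)"
proof -
  assume i: "i < N"
  have "\<forall>l<n i. 0 \<le> w i l" using w_pos i by (simp add: less_imp_le)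
  moreover have "\<pi> i \<in> couplings nuhat (dm {..<n i} (\<lambda>l. ennreal (w i l)) (x i))"
    using pi mu i by metis
  ultimately show ?thesis unfolding cpl_def using nu x_inj i by blast
qed

definition f :: "nat \<Rightarrow> nat \<Rightarrow> 'a \<Rightarrow> ennreal" where
  "f i l = cpl.dens nuhat (\<pi> i) (x i l)"

lemma f_meas: "i < N \<Longrightarrow> f i l \<in> borel_measurable borel"
  unfolding f_def by (rule cpl.dens_meas[OF cpl_i])

lemma nu_space[simp]: "space nuhat = UNIV"
  using sets_eq_imp_space_eq[OF nu(2)] by simp

lemma mnu[simp]: "measurable nuhat N' = measurable borel N'"
  by (rule measurable_cong_sets[OF nu(2) refl])

lemma f_sum1: "i < N \<Longrightarrow> AE y in nuhat. (\<Sum>l<n i. f i l y) = 1"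
  using cpl.B3[OF cpl_i] unfolding f_def by simp

lemma f_sum1_all: "AE y in nuhat. \<forall>i<N. (\<Sum>l<n i. f i l y) = 1"
proof -
  have "AE y in nuhat. \<forall>i\<in>{..<N}. (\<Sum>l<n i. f i l y) = 1"
    using f_sum1 by (intro eventually_ball_finite) auto
  then show ?thesis by auto
qed

lemma f_int: "i < N \<Longrightarrow> l < n i \<Longrightarrow> (\<integral>\<^sup>+ y. f i l y \<partial>nuhat) = ennreal (w i l)"
  unfolding f_def by (rule cpl.B5[OF cpl_i])

definition G :: "nat \<Rightarrow> nat \<Rightarrow> nat \<times> nat \<Rightarrow> ennreal" where
  "G j i lm = (if j = i then (if fst lm = snd lm then ennreal (w i (fst lm)) else 0)
      else \<integral>\<^sup>+ y. f j (fst lm) y * f i (snd lm) y \<partial>nuhat)"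

lemma int_f_sum:
  assumes j: "j < N" and i: "i < N" and l: "l < n j"
  shows "(\<Sum>m<n i. \<integral>\<^sup>+ y. f j l y * f i m y \<partial>nuhat) = ennreal (w j l)"
proof -
  have "(\<Sum>m<n i. \<integral>\<^sup>+ y. f j l y * f i m y \<partial>nuhat) = (\<integral>\<^sup>+ y. (\<Sum>m<n i. f j l y * f i m y) \<partial>nuhat)"
    using f_meas[OF i] f_meas[OF j] by (subst nn_integral_sum) auto
  also have "\<dots> = (\<integral>\<^sup>+ y. f j l y \<partial>nuhat)"
  proof (intro nn_integral_cong_AE)
    show "AE y in nuhat. (\<Sum>m<n i. f j l y * f i m y) = f j l y"
      using f_sum1[OF i] by eventually_elim (simp add: sum_distrib_left[symmetric])
  qed
  also have "\<dots> = ennreal (w j l)" by (rule f_int[OF j l])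
  finally show ?thesis .
qed

lemma int_f_sum':
  assumes j: "j < N" and i: "i < N" and m: "m < n i"
  shows "(\<Sum>l<n j. \<integral>\<^sup>+ y. f j l y * f i m y \<partial>nuhat) = ennreal (w i m)"
  using int_f_sum[OF i j m] by (simp add: mult.commute)

lemma G_rows: "j < N \<Longrightarrow> i < N \<Longrightarrow> \<forall>l<n j. (\<Sum>m<n i. G j i (l,m)) = ennreal (w j l)"
proof (intro allI impI)
  fix l assume j: "j < N" and i: "i < N" and l: "l < n j"
  show "(\<Sum>m<n i. G j i (l,m)) = ennreal (w j l)"
  proof (cases "j = i")
    case True
    then have "(\<Sum>m<n i. G j i (l,m)) = (\<Sum>m<n i. if l = m then ennreal (w i l) else 0)"
      unfolding G_def by (intro sum.cong refl) auto
    also have "\<dots> = ennreal (w j l)" using True l by simp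
    finally show ?thesis .
  next
    case False
    then have "(\<Sum>m<n i. G j i (l,m)) = (\<Sum>m<n i. \<integral>\<^sup>+ y. f j l y * f i m y \<partial>nuhat)"
      unfolding G_def by (intro sum.cong refl) auto
    also have "\<dots> = ennreal (w j l)" by (rule int_f_sum[OF j i l])
    finally show ?thesis .
  qed
qed

lemma G_cols: "j < N \<Longrightarrow> i < N \<Longrightarrow> \<forall>m<n i. (\<Sum>l<n j. G j i (l,m)) = ennreal (w i m)"
proof (intro allI impI)
  fix m assume j: "j < N" and i: "i < N" and m: "m < n i"
  show "(\<Sum>l<n j. G j i (l,m)) = ennreal (w i m)"
  proof (cases "j = i")
    case True
    then have "(\<Sum>l<n j. G j i (l,m)) = (\<Sum>l<n j. if m = l then ennreal (w i m) else 0)"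
      unfolding G_def by (intro sum.cong refl) auto
    also have "\<dots> = ennreal (w i m)" using True m by simp
    finally show ?thesis .
  next
    case False
    then have "(\<Sum>l<n j. G j i (l,m)) = (\<Sum>l<n j. \<integral>\<^sup>+ y. f j l y * f i m y \<partial>nuhat)"
      unfolding G_def by (intro sum.cong refl) auto
    also have "\<dots> = ennreal (w i m)" by (rule int_f_sum'[OF j i m])
    finally show ?thesis .
  qed
qed

definition Kint :: "nat \<Rightarrow> nat \<Rightarrow> 'a \<Rightarrow> ennreal" where
  "Kint j i y = (if i = j then 0 else (\<Sum>l<n j. \<Sum>m<n i. f j l y * f i m y * ennreal (norm (x j l - x i m) powr p)))"

definition Kc :: "nat \<Rightarrow> nat \<Rightarrow> ennreal" where
  "Kc j i = (\<Sum>l<n j. \<Sum>m<n i. G j i (l,m) * ennreal (norm (x j l - x i m) powr p))"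

lemma W1:
  assumes j: "j < N" and i: "i < N"
  shows "wass_pp p (mu j) (mu i) \<le> Kc j i"
proof -
  have wnn: "\<forall>l<n j. 0 \<le> w j l" using w_pos j by (simp add: less_imp_le)
  have c: "dm ({..<n j}\<times>{..<n i}) (G j i) (\<lambda>(l,m). (x j l, x i m)) \<in> couplings (mu j) (mu i)"
    using coupling_G[OF G_rows[OF j i] G_cols[OF j i] _ wnn, of "x j" "x i"] w_sum mu i j by simp
  have "wass_pp p (mu j) (mu i) \<le> (\<integral>\<^sup>+ z. ennreal (norm (fst z - snd z) powr p) \<partial>dm ({..<n j}\<times>{..<n i}) (G j i) (\<lambda>(l,m). (x j l, x i m)))"
    by (rule wass_le[OF c])
  also have "\<dots> = (\<Sum>k\<in>{..<n j}\<times>{..<n i}. G j i k * ennreal (norm (fst ((\<lambda>(l,m). (x j l, x i m)) k) - snd ((\<lambda>(l,m). (x j l, x i m)) k)) powr p))"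
    by (rule cost_dm) simp
  also have "\<dots> = Kc j i"
    unfolding Kc_def sum.cartesian_product by (intro sum.cong refl) auto
  finally show ?thesis .
qed

lemma Kc_eq:
  assumes j: "j < N" and i: "i < N"
  shows "Kc j i = (\<integral>\<^sup>+ y. Kint j i y \<partial>nuhat)"
proof (cases "i = j")
  case True
  have "Kc j i = 0" unfolding Kc_def G_def using True p by (intro sum.neutral) auto
  moreover have "(\<integral>\<^sup>+ y. Kint j i y \<partial>nuhat) = 0" unfolding Kint_def using True by simp
  ultimately show ?thesis by simp
next
  case False
  have "Kc j i = (\<Sum>l<n j. \<Sum>m<n i. \<integral>\<^sup>+ y. f j l y * f i m y * ennreal (norm (x j l - x i m) powr p) \<partial>nuhat)"
    unfolding Kc_def G_def using False f_meas[OF i] f_meas[OF j]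
    by (intro sum.cong refl) (auto simp: nn_integral_multc)
  also have "\<dots> = (\<Sum>l<n j. \<integral>\<^sup>+ y. (\<Sum>m<n i. f j l y * f i m y * ennreal (norm (x j l - x i m) powr p)) \<partial>nuhat)"
    using f_meas[OF i] f_meas[OF j] by (intro sum.cong refl) (subst nn_integral_sum, auto)
  also have "\<dots> = (\<integral>\<^sup>+ y. (\<Sum>l<n j. \<Sum>m<n i. f j l y * f i m y * ennreal (norm (x j l - x i m) powr p)) \<partial>nuhat)"
    using f_meas[OF i] f_meas[OF j] by (subst nn_integral_sum) auto
  also have "\<dots> = (\<integral>\<^sup>+ y. Kint j i y \<partial>nuhat)"
    unfolding Kint_def using False by simp
  finally show ?thesis .
qed

lemma Wmix:
  assumes i: "i < N"
  shows "wass_pp p (mixture N lam mu) (mu i) \<le> (\<Sum>j<N. ennreal (lam j) * Kc j i)"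
proof -
  have rows: "\<forall>j<N. \<forall>l<n j. (\<Sum>m<n i. G j i (l,m)) = ennreal (w j l)" using G_rows i by blast
  have cols: "\<forall>j<N. \<forall>m<n i. (\<Sum>l<n j. G j i (l,m)) = ennreal (w i m)" using G_cols i by blast
  have wnn: "\<forall>j<N. \<forall>l<n j. 0 \<le> w j l" using w_pos by (simp add: less_imp_le)
  have lnn: "\<forall>j<N. 0 \<le> lam j" using lam_pos by (simp add: less_imp_le)
  let ?D = "dm (SIGMA j:{..<N}. {..<n j}\<times>{..<n i}) (\<lambda>(j,l,m). ennreal (lam j) * G j i (l,m)) (\<lambda>(j,l,m). (x j l, x i m))"
  have c: "?D \<in> couplings (mixture N lam mu) (mu i)"
    using coupling_mix[OF rows cols w_sum wnn lnn lam_sum mu] mu i by simp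
  have "wass_pp p (mixture N lam mu) (mu i) \<le> (\<integral>\<^sup>+ z. ennreal (norm (fst z - snd z) powr p) \<partial>?D)"
    by (rule wass_le[OF c])
  also have "\<dots> = (\<Sum>k\<in>(SIGMA j:{..<N}. {..<n j}\<times>{..<n i}). (\<lambda>(j,l,m). ennreal (lam j) * G j i (l,m)) k
      * ennreal (norm (fst ((\<lambda>(j,l,m). (x j l, x i m)) k) - snd ((\<lambda>(j,l,m). (x j l, x i m)) k)) powr p))"
    by (rule cost_dm) auto
  also have "\<dots> = (\<Sum>j<N. \<Sum>l<n j. \<Sum>m<n i. ennreal (lam j) * (G j i (l,m) * ennreal (norm (x j l - x i m) powr p)))"
    unfolding sum_Sig by (intro sum.cong refl) (simp add: mult.assoc)
  also have "\<dots> = (\<Sum>j<N. ennreal (lam j) * Kc j i)"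
    unfolding Kc_def by (simp add: sum_distrib_left)
  finally show ?thesis .
qed

definition Dint :: "nat \<Rightarrow> 'a \<Rightarrow> ennreal" where
  "Dint i y = (\<Sum>l<n i. f i l y * ennreal (norm (y - x i l) powr p))"

lemma cost_pi:
  assumes i: "i < N"
  shows "(\<integral>\<^sup>+ z. ennreal (norm (fst z - snd z) powr p) \<partial>\<pi> i) = (\<integral>\<^sup>+ y. Dint i y \<partial>nuhat)"
proof -
  have "(\<integral>\<^sup>+ z. ennreal (norm (fst z - snd z) powr p) \<partial>\<pi> i)
      = (\<Sum>l<n i. \<integral>\<^sup>+ y. f i l y * ennreal (norm (y - x i l) powr p) \<partial>nuhat)"
    unfolding f_def using cpl.B4[OF cpl_i[OF i] meas_cost] by simp
  also have "\<dots> = (\<integral>\<^sup>+ y. Dint i y \<partial>nuhat)"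
    unfolding Dint_def using f_meas[OF i] by (subst nn_integral_sum) auto
  finally show ?thesis .
qed

lemma pw_conv:
  assumes y: "\<forall>i<N. (\<Sum>l<n i. f i l y) = 1"
  shows "\<exists>r. (\<forall>i<N. \<forall>l<n i. f i l y = ennreal (r i l) \<and> 0 \<le> r i l) \<and> (\<forall>i<N. (\<Sum>l<n i. r i l) = 1)"
proof (intro exI conjI allI impI)
  fix i l assume i: "i < N" and l: "l < n i"
  have "f i l y \<le> (\<Sum>l<n i. f i l y)" using l by (intro member_le_sum) auto
  then have "f i l y \<noteq> \<top>" using y i by (auto simp: top_unique)
  then show "f i l y = ennreal (enn2real (f i l y))" by (simp add: ennreal_enn2real_if)
  show "0 \<le> enn2real (f i l y)" by simp
next
  fix i assume i: "i < N"
  have fin: "\<forall>l<n i. f i l y \<noteq> \<top>"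
  proof (intro allI impI)
    fix l assume l: "l < n i"
    have "f i l y \<le> (\<Sum>l<n i. f i l y)" using l by (intro member_le_sum) auto
    then show "f i l y \<noteq> \<top>" using y i by (auto simp: top_unique)
  qed
  have "ennreal (\<Sum>l<n i. enn2real (f i l y)) = (\<Sum>l<n i. ennreal (enn2real (f i l y)))"
    by (subst sum_ennreal) auto
  also have "\<dots> = (\<Sum>l<n i. f i l y)" using fin by (intro sum.cong refl) (simp add: ennreal_enn2real_if)
  also have "\<dots> = 1" using y i by simp
  finally show "(\<Sum>l<n i. enn2real (f i l y)) = 1"
    by (simp add: sum_nonneg)
qed

lemma Kint_conv:
  assumes r: "\<forall>i<N. \<forall>l<n i. f i l y = ennreal (r i l) \<and> 0 \<le> r i l" and j: "j < N" and i: "i < N"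
  shows "Kint j i y = ennreal (if i = j then 0 else (\<Sum>l<n j. \<Sum>m<n i. r j l * r i m * norm (x j l - x i m) powr p))"
proof (cases "i = j")
  case False
  have "(\<Sum>l<n j. \<Sum>m<n i. f j l y * f i m y * ennreal (norm (x j l - x i m) powr p))
      = (\<Sum>l<n j. \<Sum>m<n i. ennreal (r j l * r i m * norm (x j l - x i m) powr p))"
    using r i j by (intro sum.cong refl) (simp add: ennreal_mult)
  also have "\<dots> = ennreal (\<Sum>l<n j. \<Sum>m<n i. r j l * r i m * norm (x j l - x i m) powr p)"
    using r i j by (intro sum2_ennreal) auto
  finally show ?thesis unfolding Kint_def using False by simp
qed (simp add: Kint_def)

lemma Dint_conv:
  assumes r: "\<forall>i<N. \<forall>l<n i. f i l y = ennreal (r i l) \<and> 0 \<le> r i l" and i: "i < N"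
  shows "Dint i y = ennreal (\<Sum>l<n i. r i l * norm (y - x i l) powr p)"
proof -
  have "Dint i y = (\<Sum>l<n i. ennreal (r i l * norm (y - x i l) powr p))"
    unfolding Dint_def using r i by (intro sum.cong refl) (simp add: ennreal_mult)
  also have "\<dots> = ennreal (\<Sum>l<n i. r i l * norm (y - x i l) powr p)"
    using r i by (subst sum_ennreal) auto
  finally show ?thesis .
qed

lemma lam_nn: "\<forall>i<N. 0 \<le> lam i" using lam_pos by (simp add: less_imp_le)

lemma Kr_nn:
  assumes r: "\<forall>i<N. \<forall>l<n i. f i l y = ennreal (r i l) \<and> 0 \<le> r i l" and j: "j < N"
  shows "\<forall>i\<in>{..<N}. 0 \<le> (if i = j then 0 else (\<Sum>l<n j. \<Sum>m<n i. r j l * r i m * norm (x j l - x i m) powr p))"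
  using r j by (auto intro!: sum_nonneg)

lemma Dr_nn:
  assumes r: "\<forall>i<N. \<forall>l<n i. f i l y = ennreal (r i l) \<and> 0 \<le> r i l"
  shows "\<forall>i\<in>{..<N}. 0 \<le> (\<Sum>l<n i. r i l * norm (y - x i l) powr p)"
  using r by (auto intro!: sum_nonneg)

lemma PW1:
  assumes j: "j < N"
  shows "AE y in nuhat. (\<Sum>i<N. ennreal (lam i) * Kint j i y) \<le> ennreal (1 / lam j) * (\<Sum>i<N. ennreal (lam i) * Dint i y)"
  using f_sum1_all
proof eventually_elim
  case (elim y)
  obtain r where r: "\<forall>i<N. \<forall>l<n i. f i l y = ennreal (r i l) \<and> 0 \<le> r i l" and s: "\<forall>i<N. (\<Sum>l<n i. r i l) = 1"
    using pw_conv[OF elim] by blast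
  have rnn: "\<forall>i<N. \<forall>l<n i. 0 \<le> r i l" using r by auto
  have "(\<Sum>i<N. ennreal (lam i) * Kint j i y)
      = (\<Sum>i<N. ennreal (lam i) * ennreal (if i = j then 0 else (\<Sum>l<n j. \<Sum>m<n i. r j l * r i m * norm (x j l - x i m) powr p)))"
    using Kint_conv[OF r j] by (intro sum.cong refl) auto
  also have "\<dots> = ennreal (\<Sum>i<N. lam i * (if i = j then 0 else (\<Sum>l<n j. \<Sum>m<n i. r j l * r i m * norm (x j l - x i m) powr p)))"
    using lam_nn Kr_nn[OF r j] by (intro H_ennreal) auto
  also have "\<dots> \<le> ennreal ((1 / lam j) * (\<Sum>i<N. lam i * (\<Sum>l<n i. r i l * norm (y - x i l) powr p)))"
    by (intro ennreal_leI pw_i[OF p lam_pos lam_sum j rnn s])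
  also have "\<dots> = ennreal (1 / lam j) * ennreal (\<Sum>i<N. lam i * (\<Sum>l<n i. r i l * norm (y - x i l) powr p))"
    by (rule ennreal_mult) (use lam_pos j lam_nn Dr_nn[OF r] in \<open>auto intro!: sum_nonneg\<close>)
  also have "ennreal (\<Sum>i<N. lam i * (\<Sum>l<n i. r i l * norm (y - x i l) powr p)) = (\<Sum>i<N. ennreal (lam i) * Dint i y)"
    using H_ennreal[of "{..<N}" lam "\<lambda>i. \<Sum>l<n i. r i l * norm (y - x i l) powr p"] lam_nn Dr_nn[OF r] Dint_conv[OF r]
    by (simp add: Dint_conv[OF r])
  finally show ?case .
qed

lemma PW3:
  shows "AE y in nuhat. (\<Sum>j<N. ennreal (lam j) * (\<Sum>i<N. ennreal (lam i) * Kint j i y)) \<le> 2 * (\<Sum>i<N. ennreal (lam i) * Dint i y)"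
  using f_sum1_all
proof eventually_elim
  case (elim y)
  obtain r where r: "\<forall>i<N. \<forall>l<n i. f i l y = ennreal (r i l) \<and> 0 \<le> r i l" and s: "\<forall>i<N. (\<Sum>l<n i. r i l) = 1"
    using pw_conv[OF elim] by blast
  have rnn: "\<forall>i<N. \<forall>l<n i. 0 \<le> r i l" using r by auto
  let ?K = "\<lambda>j i. (if i = j then 0 else (\<Sum>l<n j. \<Sum>m<n i. r j l * r i m * norm (x j l - x i m) powr p))"
  have inner: "\<And>j. j < N \<Longrightarrow> (\<Sum>i<N. ennreal (lam i) * Kint j i y) = ennreal (\<Sum>i<N. lam i * ?K j i)"
  proof -
    fix j assume j: "j < N"
    have "(\<Sum>i<N. ennreal (lam i) * Kint j i y) = (\<Sum>i<N. ennreal (lam i) * ennreal (?K j i))"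
      using Kint_conv[OF r j] by (intro sum.cong refl) auto
    also have "\<dots> = ennreal (\<Sum>i<N. lam i * ?K j i)"
      using lam_nn Kr_nn[OF r j] by (intro H_ennreal) auto
    finally show "(\<Sum>i<N. ennreal (lam i) * Kint j i y) = ennreal (\<Sum>i<N. lam i * ?K j i)" .
  qed
  have "(\<Sum>j<N. ennreal (lam j) * (\<Sum>i<N. ennreal (lam i) * Kint j i y))
      = (\<Sum>j<N. ennreal (lam j) * ennreal (\<Sum>i<N. lam i * ?K j i))"
    using inner by (intro sum.cong refl) auto
  also have "\<dots> = ennreal (\<Sum>j<N. lam j * (\<Sum>i<N. lam i * ?K j i))"
  proof (intro H_ennreal)
    show "\<forall>i\<in>{..<N}. 0 \<le> lam i" using lam_nn by auto
    show "\<forall>j\<in>{..<N}. 0 \<le> (\<Sum>i<N. lam i * ?K j i)"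
      using lam_nn Kr_nn[OF r] by (auto intro!: sum_nonneg mult_nonneg_nonneg)
  qed
  also have "\<dots> \<le> ennreal (2 * (\<Sum>i<N. lam i * (\<Sum>l<n i. r i l * norm (y - x i l) powr p)))"
    by (intro ennreal_leI pw_iii[OF p lam_pos lam_sum rnn s])
  also have "\<dots> = 2 * ennreal (\<Sum>i<N. lam i * (\<Sum>l<n i. r i l * norm (y - x i l) powr p))"
    by (subst ennreal_mult) (use lam_nn Dr_nn[OF r] in \<open>auto intro!: sum_nonneg\<close>)
  also have "ennreal (\<Sum>i<N. lam i * (\<Sum>l<n i. r i l * norm (y - x i l) powr p)) = (\<Sum>i<N. ennreal (lam i) * Dint i y)"
    using H_ennreal[of "{..<N}" lam "\<lambda>i. \<Sum>l<n i. r i l * norm (y - x i l) powr p"] lam_nn Dr_nn[OF r]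
    by (simp add: Dint_conv[OF r])
  finally show ?case .
qed

lemma Kint_meas: "j < N \<Longrightarrow> i < N \<Longrightarrow> Kint j i \<in> borel_measurable borel"
proof -
  assume j: "j < N" and i: "i < N"
  note [measurable] = f_meas[OF i] f_meas[OF j]
  show ?thesis unfolding Kint_def by measurable
qed

lemma Dint_meas: "i < N \<Longrightarrow> Dint i \<in> borel_measurable borel"
proof -
  assume i: "i < N"
  note [measurable] = f_meas[OF i]
  show ?thesis unfolding Dint_def by measurable
qed

lemma int_lin:
  assumes "\<And>i. i \<in> I \<Longrightarrow> g i \<in> borel_measurable borel"
  shows "(\<Sum>i\<in>I. c i * (\<integral>\<^sup>+ y. g i y \<partial>nuhat)) = (\<integral>\<^sup>+ y. (\<Sum>i\<in>I. c i * g i y) \<partial>nuhat)"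
  using assms by (subst nn_integral_sum) (auto simp: nn_integral_cmult)

definition Cst :: ennreal where
  "Cst = (\<Sum>i<N. ennreal (lam i) * (\<integral>\<^sup>+ z. ennreal (norm (fst z - snd z) powr p) \<partial>\<pi> i))"

lemma Cst_eq: "Cst = (\<integral>\<^sup>+ y. (\<Sum>i<N. ennreal (lam i) * Dint i y) \<partial>nuhat)"
proof -
  have "Cst = (\<Sum>i<N. ennreal (lam i) * (\<integral>\<^sup>+ y. Dint i y \<partial>nuhat))"
    unfolding Cst_def by (intro sum.cong refl) (simp add: cost_pi)
  also have "\<dots> = (\<integral>\<^sup>+ y. (\<Sum>i<N. ennreal (lam i) * Dint i y) \<partial>nuhat)"
    by (rule int_lin) (simp add: Dint_meas)
  finally show ?thesis .
qed

lemma K1: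
  assumes j: "j < N"
  shows "Psi p N lam mu (mu j) \<le> ennreal (1 / lam j) * Cst"
proof -
  have "Psi p N lam mu (mu j) \<le> (\<Sum>i<N. ennreal (lam i) * Kc j i)"
    unfolding Psi_def using W1[OF j] by (intro sum_mono mult_left_mono) auto
  also have "\<dots> = (\<Sum>i<N. ennreal (lam i) * (\<integral>\<^sup>+ y. Kint j i y \<partial>nuhat))"
    using Kc_eq[OF j] by simp
  also have "\<dots> = (\<integral>\<^sup>+ y. (\<Sum>i<N. ennreal (lam i) * Kint j i y) \<partial>nuhat)"
    by (rule int_lin) (simp add: Kint_meas[OF j])
  also have "\<dots> \<le> (\<integral>\<^sup>+ y. ennreal (1 / lam j) * (\<Sum>i<N. ennreal (lam i) * Dint i y) \<partial>nuhat)"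
    by (rule nn_integral_mono_AE[OF PW1[OF j]])
  also have "\<dots> = ennreal (1 / lam j) * Cst"
    unfolding Cst_eq using Dint_meas by (subst nn_integral_cmult) auto
  finally show ?thesis .
qed

lemma Q_le: "(\<Sum>j<N. ennreal (lam j) * (\<Sum>i<N. ennreal (lam i) * Kc j i)) \<le> 2 * Cst"
proof -
  have "(\<Sum>j<N. ennreal (lam j) * (\<Sum>i<N. ennreal (lam i) * Kc j i))
      = (\<Sum>j<N. ennreal (lam j) * (\<integral>\<^sup>+ y. (\<Sum>i<N. ennreal (lam i) * Kint j i y) \<partial>nuhat))"
  proof (intro sum.cong refl arg_cong2[where f="(*)"])
    fix j assume j: "j \<in> {..<N}"
    have "(\<Sum>i<N. ennreal (lam i) * Kc j i) = (\<Sum>i<N. ennreal (lam i) * (\<integral>\<^sup>+ y. Kint j i y \<partial>nuhat))"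
      using Kc_eq j by simp
    also have "\<dots> = (\<integral>\<^sup>+ y. (\<Sum>i<N. ennreal (lam i) * Kint j i y) \<partial>nuhat)"
      by (rule int_lin) (use Kint_meas j in simp)
    finally show "(\<Sum>i<N. ennreal (lam i) * Kc j i) = (\<integral>\<^sup>+ y. (\<Sum>i<N. ennreal (lam i) * Kint j i y) \<partial>nuhat)" .
  qed
  also have "\<dots> = (\<integral>\<^sup>+ y. (\<Sum>j<N. ennreal (lam j) * (\<Sum>i<N. ennreal (lam i) * Kint j i y)) \<partial>nuhat)"
  proof (rule int_lin)
    fix j assume j: "j \<in> {..<N}"
    note [measurable] = Kint_meas[of j] 
    show "(\<lambda>y. \<Sum>i<N. ennreal (lam i) * Kint j i y) \<in> borel_measurable borel"
      using Kint_meas j by (intro borel_measurable_sum borel_measurable_times_ennreal) auto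
  qed
  also have "\<dots> \<le> (\<integral>\<^sup>+ y. 2 * (\<Sum>i<N. ennreal (lam i) * Dint i y) \<partial>nuhat)"
    by (rule nn_integral_mono_AE[OF PW3])
  also have "\<dots> = 2 * Cst"
    unfolding Cst_eq using Dint_meas by (subst nn_integral_cmult) auto
  finally show ?thesis .
qed

lemma K3: "(\<Sum>j<N. ennreal (lam j) * Psi p N lam mu (mu j)) \<le> 2 * Cst"
proof -
  have "(\<Sum>j<N. ennreal (lam j) * Psi p N lam mu (mu j)) \<le> (\<Sum>j<N. ennreal (lam j) * (\<Sum>i<N. ennreal (lam i) * Kc j i))"
    unfolding Psi_def using W1 by (intro sum_mono mult_left_mono) auto
  also have "\<dots> \<le> 2 * Cst" by (rule Q_le)
  finally show ?thesis .
qed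

lemma K2: "Psi p N lam mu (mixture N lam mu) \<le> 2 * Cst"
proof -
  have "Psi p N lam mu (mixture N lam mu) \<le> (\<Sum>i<N. ennreal (lam i) * (\<Sum>j<N. ennreal (lam j) * Kc j i))"
    unfolding Psi_def using Wmix by (intro sum_mono mult_left_mono) auto
  also have "\<dots> = (\<Sum>j<N. ennreal (lam j) * (\<Sum>i<N. ennreal (lam i) * Kc j i))"
  proof -
    have "(\<Sum>i<N. ennreal (lam i) * (\<Sum>j<N. ennreal (lam j) * Kc j i)) = (\<Sum>i<N. \<Sum>j<N. ennreal (lam j) * (ennreal (lam i) * Kc j i))"
      by (simp only: sum_distrib_left mult.left_commute)
    also have "\<dots> = (\<Sum>j<N. \<Sum>i<N. ennreal (lam j) * (ennreal (lam i) * Kc j i))"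
      by (rule sum.swap)
    also have "\<dots> = (\<Sum>j<N. ennreal (lam j) * (\<Sum>i<N. ennreal (lam i) * Kc j i))"
      by (simp only: sum_distrib_left)
    finally show ?thesis .
  qed
  also have "\<dots> \<le> 2 * Cst" by (rule Q_le)
  finally show ?thesis .
qed

end


lemma eps_arg:
  fixes T Ps :: ennreal and cr :: real and mu :: "nat \<Rightarrow> 'a::euclidean_space measure"
  assumes cr: "0 < cr" and lam_pos: "\<forall>i<N. 0 < lam i" and lam_sum: "(\<Sum>i<N. lam i) = 1"
    and Ps: "Ps = (\<Sum>i<N. ennreal (lam i) * wass_pp p nuhat (mu i))"
    and H: "\<And>\<pi>. \<forall>i<N. \<pi> i \<in> couplings nuhat (mu i) \<Longrightarrow>
       T \<le> ennreal cr * (\<Sum>i<N. ennreal (lam i) * (\<integral>\<^sup>+ z. ennreal (norm (fst z - snd z) powr p) \<partial>\<pi> i))"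
  shows "T \<le> ennreal cr * Ps"
proof (cases "Ps = top")
  case True
  then show ?thesis using cr by simp
next
  case False
  show ?thesis
  proof (rule ennreal_le_epsilon)
    fix e :: real assume e: "0 < e"
    define \<delta> where "\<delta> = e / cr"
    have d: "0 < \<delta>" unfolding \<delta>_def using e cr by simp
    have Wfin: "\<forall>i<N. wass_pp p nuhat (mu i) \<noteq> top"
    proof (intro allI impI notI)
      fix i assume i: "i < N" and W: "wass_pp p nuhat (mu i) = top"
      have "ennreal (lam i) * wass_pp p nuhat (mu i) \<le> Ps"
        unfolding Ps using i by (intro member_le_sum) auto
      moreover have "ennreal (lam i) \<noteq> 0" using lam_pos i by (simp add: ennreal_eq_0_iff not_le)
      ultimately show False using W False by (simp add: top_unique)
    qed
    have "\<forall>i. \<exists>\<gamma>. i < N \<longrightarrow> \<gamma> \<in> couplings nuhat (mu i) \<and>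
        (\<integral>\<^sup>+ z. ennreal (norm (fst z - snd z) powr p) \<partial>\<gamma>) < wass_pp p nuhat (mu i) + ennreal \<delta>"
    proof
      fix i
      show "\<exists>\<gamma>. i < N \<longrightarrow> \<gamma> \<in> couplings nuhat (mu i) \<and>
        (\<integral>\<^sup>+ z. ennreal (norm (fst z - snd z) powr p) \<partial>\<gamma>) < wass_pp p nuhat (mu i) + ennreal \<delta>"
      proof (cases "i < N")
        case True
        obtain wr where wr: "wass_pp p nuhat (mu i) = ennreal wr" "0 \<le> wr"
          using Wfin True by (cases "wass_pp p nuhat (mu i)" rule: ennreal_cases) auto
        have "wass_pp p nuhat (mu i) < wass_pp p nuhat (mu i) + ennreal \<delta>"
          using wr d by (simp add: ennreal_plus[symmetric] ennreal_less_iff del: ennreal_plus)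
        then obtain \<gamma> where "\<gamma> \<in> couplings nuhat (mu i)"
          "(\<integral>\<^sup>+ z. ennreal (norm (fst z - snd z) powr p) \<partial>\<gamma>) < wass_pp p nuhat (mu i) + ennreal \<delta>"
          unfolding wass_pp_def[of p nuhat "mu i"] INF_less_iff by blast
        then show ?thesis by blast
      qed auto
    qed
    then obtain \<pi> where pi: "\<forall>i<N. \<pi> i \<in> couplings nuhat (mu i) \<and>
        (\<integral>\<^sup>+ z. ennreal (norm (fst z - snd z) powr p) \<partial>\<pi> i) < wass_pp p nuhat (mu i) + ennreal \<delta>"
      by metis
    have "T \<le> ennreal cr * (\<Sum>i<N. ennreal (lam i) * (\<integral>\<^sup>+ z. ennreal (norm (fst z - snd z) powr p) \<partial>\<pi> i))"
      using pi by (intro H) auto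
    also have "\<dots> \<le> ennreal cr * (\<Sum>i<N. ennreal (lam i) * (wass_pp p nuhat (mu i) + ennreal \<delta>))"
      using pi by (intro mult_left_mono sum_mono) (auto intro: less_imp_le)
    also have "(\<Sum>i<N. ennreal (lam i) * (wass_pp p nuhat (mu i) + ennreal \<delta>)) = Ps + (\<Sum>i<N. ennreal (lam i)) * ennreal \<delta>"
      unfolding Ps by (simp add: distrib_left sum.distrib sum_distrib_right)
    also have "(\<Sum>i<N. ennreal (lam i)) = 1" using lam_pos lam_sum by (subst sum_ennreal) (auto simp: less_imp_le)
    also have "ennreal cr * (Ps + 1 * ennreal \<delta>) = ennreal cr * Ps + ennreal e"
      using cr d unfolding \<delta>_def by (simp add: distrib_left ennreal_mult[symmetric])
    finally show "T \<le> ennreal cr * Ps + ennreal e" .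
  qed
qed


theorem proposition4p3:
  fixes p :: real and N :: nat and lam :: "nat \<Rightarrow> real"
    and n :: "nat \<Rightarrow> nat" and w :: "nat \<Rightarrow> nat \<Rightarrow> real"
    and x :: "nat \<Rightarrow> nat \<Rightarrow> 'a::euclidean_space"
    and mu :: "nat \<Rightarrow> 'a measure" and nuhat :: "'a measure" and P :: "nat pmf"
  assumes p: "p = 1 \<or> p = 2"
    and N: "N \<ge> 2"
    and lam_pos: "\<forall>i<N. 0 < lam i \<and> lam i < 1"
    and lam_sum: "(\<Sum>i<N. lam i) = 1"
    and w_pos: "\<forall>i<N. \<forall>l<n i. 0 < w i l"
    and w_sum: "\<forall>i<N. (\<Sum>l<n i. w i l) = 1"
    and x_inj: "\<forall>i<N. inj_on (x i) {..<n i}"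
    and mu_def: "\<forall>i<N. mu i = discrete_measure (n i) (w i) (x i)"
    and nuhat_prob: "borel_prob nuhat"
    and nuhat_opt: "\<forall>\<nu>. borel_prob \<nu> \<longrightarrow> Psi p N lam mu nuhat \<le> Psi p N lam mu \<nu>"
    and P_def: "\<forall>i<N. pmf P i = lam i"
  shows "(\<forall>j<N. Psi p N lam mu (mu j) \<le> ennreal (1 / lam j) * Psi p N lam mu nuhat
            \<and> (lam j = (MAX i\<in>{..<N}. lam i)
                 \<longrightarrow> Psi p N lam mu (mu j) \<le> of_nat N * Psi p N lam mu nuhat))
       \<and> Psi p N lam mu (mixture N lam mu) \<le> 2 * Psi p N lam mu nuhat
       \<and> (\<integral>\<^sup>+ i. Psi p N lam mu (mu i) \<partial>(measure_pmf P)) \<le> 2 * Psi p N lam mu nuhat"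
proof -
  have lp: "\<forall>i<N. 0 < lam i" using lam_pos by auto
  have mu': "\<forall>i<N. mu i = dm {..<n i} (\<lambda>l. ennreal (w i l)) (x i)"
    using mu_def by (simp add: discrete_measure_dm)
  have nu: "prob_space nuhat" "sets nuhat = sets borel" using nuhat_prob by (auto simp: borel_prob_def)
  have Ps: "Psi p N lam mu nuhat = (\<Sum>i<N. ennreal (lam i) * wass_pp p nuhat (mu i))"
    by (simp add: Psi_def)
  have bs: "\<And>\<pi>. \<forall>i<N. \<pi> i \<in> couplings nuhat (mu i) \<Longrightarrow> bsetup p N lam n w x mu nuhat \<pi>"
    unfolding bsetup_def using p lp lam_sum w_pos w_sum x_inj mu' nu by blast
  have part1: "\<forall>j<N. Psi p N lam mu (mu j) \<le> ennreal (1 / lam j) * Psi p N lam mu nuhat"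
  proof (intro allI impI)
    fix j assume j: "j < N"
    show "Psi p N lam mu (mu j) \<le> ennreal (1 / lam j) * Psi p N lam mu nuhat"
    proof (rule eps_arg[OF _ lp lam_sum Ps])
      show "0 < 1 / lam j" using lp j by simp
      fix \<pi> assume pi: "\<forall>i<N. \<pi> i \<in> couplings nuhat (mu i)"
      interpret bsetup p N lam n w x mu nuhat \<pi> by (rule bs[OF pi])
      show "Psi p N lam mu (mu j) \<le> ennreal (1 / lam j) *
          (\<Sum>i<N. ennreal (lam i) * (\<integral>\<^sup>+ z. ennreal (norm (fst z - snd z) powr p) \<partial>\<pi> i))"
        using K1[OF j] unfolding Cst_def .
    qed
  qed
  have part1b: "\<forall>j<N. lam j = (MAX i\<in>{..<N}. lam i) \<longrightarrow> Psi p N lam mu (mu j) \<le> of_nat N * Psi p N lam mu nuhat"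
  proof (intro allI impI)
    fix j assume j: "j < N" and mx: "lam j = (MAX i\<in>{..<N}. lam i)"
    have "1 = (\<Sum>i<N. lam i)" using lam_sum by simp
    also have "\<dots> \<le> (\<Sum>i<N. lam j)"
      by (intro sum_mono) (auto simp: mx intro!: Max_ge)
    also have "\<dots> = real N * lam j" by simp
    finally have "1 / lam j \<le> real N" using lp j by (simp add: divide_le_eq)
    then have "ennreal (1 / lam j) \<le> of_nat N" by (simp add: ennreal_of_nat_eq_real_of_nat ennreal_leI)
    then have "ennreal (1 / lam j) * Psi p N lam mu nuhat \<le> of_nat N * Psi p N lam mu nuhat"
      by (rule mult_right_mono) simp
    then show "Psi p N lam mu (mu j) \<le> of_nat N * Psi p N lam mu nuhat"
      using part1 j order_trans by blast
  qed
  have part2: "Psi p N lam mu (mixture N lam mu) \<le> 2 * Psi p N lam mu nuhat"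
  proof -
    have "Psi p N lam mu (mixture N lam mu) \<le> ennreal 2 * Psi p N lam mu nuhat"
    proof (rule eps_arg[OF _ lp lam_sum Ps])
      fix \<pi> assume pi: "\<forall>i<N. \<pi> i \<in> couplings nuhat (mu i)"
      interpret bsetup p N lam n w x mu nuhat \<pi> by (rule bs[OF pi])
      show "Psi p N lam mu (mixture N lam mu) \<le> ennreal 2 *
          (\<Sum>i<N. ennreal (lam i) * (\<integral>\<^sup>+ z. ennreal (norm (fst z - snd z) powr p) \<partial>\<pi> i))"
        using K2 unfolding Cst_def by simp
    qed simp
    then show ?thesis by simp
  qed
  have part3: "(\<integral>\<^sup>+ i. Psi p N lam mu (mu i) \<partial>(measure_pmf P)) \<le> 2 * Psi p N lam mu nuhat"
  proof -
    have "measure (measure_pmf P) {..<N} = 1"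
      using P_def lam_sum by (simp add: measure_measure_pmf_finite)
    then have "AE i in measure_pmf P. i \<in> {..<N}"
      by (subst (asm) measure_pmf.prob_eq_1) auto
    then have supp: "\<forall>i\<in>set_pmf P. i < N" by (simp add: AE_measure_pmf_iff)
    have "(\<integral>\<^sup>+ i. Psi p N lam mu (mu i) \<partial>(measure_pmf P)) = (\<Sum>i<N. Psi p N lam mu (mu i) * pmf P i)"
      using supp by (intro nn_integral_measure_pmf_support) auto
    also have "\<dots> = (\<Sum>j<N. ennreal (lam j) * Psi p N lam mu (mu j))"
      using P_def by (intro sum.cong refl) (simp add: mult.commute)
    also have "\<dots> \<le> ennreal 2 * Psi p N lam mu nuhat"
    proof (rule eps_arg[OF _ lp lam_sum Ps])
      fix \<pi> assume pi: "\<forall>i<N. \<pi> i \<in> couplings nuhat (mu i)"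
      interpret bsetup p N lam n w x mu nuhat \<pi> by (rule bs[OF pi])
      show "(\<Sum>j<N. ennreal (lam j) * Psi p N lam mu (mu j)) \<le> ennreal 2 *
          (\<Sum>i<N. ennreal (lam i) * (\<integral>\<^sup>+ z. ennreal (norm (fst z - snd z) powr p) \<partial>\<pi> i))"
        using K3 unfolding Cst_def by simp
    qed simp
    finally show ?thesis by simp
  qed
  show ?thesis using part1 part1b part2 part3 by blast
qed


end
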